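(* Let $p$ be an odd prime. If $p\equiv 1\pmod 3$, then \[ \frac{(2/3)_{(p-1)/3}^2}{(1)_{(p-1)/3}^2}\bigg\{1+p^2\sum_{i=1}^{(p-1)/3}\frac{1}{(3i-1)^2}\bigg\}\equiv \Gamma_p(1/3)^6\pmod{p^3}, \] and if $p\equiv 2\pmod 3$, then \[ \frac{(2/3)_{(2p-1)/3}^2}{(1)_{(2p-1)/3}^2}\bigg\{1-4p^2\sum_{i=1}^{(2p-1)/3}\frac{1}{(3i-1)^2}\bigg\}\equiv -\frac{p^2}{3}\Gamma_p(1/3)^6\pmod{p^3}. \]
   Context: For complex $x$, $(x)_0=1$ and $(x)_m=x(x+1)\cdots(x+m-1)$ for positive integers $m$. $\Gamma_p$ is Morita's $p$-adic Gamma function: $\Gamma_p(0)=1$, $\Gamma_p(n)=(-1)^n\prod_{1\le k<n,\ p\nmid k}k$ for positive integers $n$, extended to $x\in\mathbb{Z}_p$ by $\Gamma_p(x)=\lim_{n\in\mathbb{N},\,|x-n|_p\to 0}\Gamma_p(n)$. Congruences are in $\mathbb{Z}_p$. *)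

theory Defs
  imports Complex_Main "HOL-Computational_Algebra.Primes" "HOL-Number_Theory.Cong"
begin

definition padic_gamma_nat :: "nat \<Rightarrow> nat \<Rightarrow> int" where
  "padic_gamma_nat p n = (-1) ^ n * (\<Prod>k \<in> {k. 1 \<le> k \<and> k < n \<and> \<not> p dvd k}. int k)"

text \<open>Congruence of rationals in Z_p: x == y (mod p^k) iff x - y lies in p^k Z_(p),
  i.e. b (x - y) = p^k a for integers a, b with p not dividing b.\<close>
definition qcong :: "nat \<Rightarrow> nat \<Rightarrow> rat \<Rightarrow> rat \<Rightarrow> bool" where
  "qcong p k x y \<longleftrightarrow> (\<exists>a b :: int. \<not> int p dvd b \<and>
       of_int b * (x - y) = of_int (int p ^ k) * of_int a)"

text \<open>The p-adic limit of f(n) as the natural number n tends p-adically to x is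
  congruent to c modulo p^k: for all natural n sufficiently p-adically close to x,
  f(n) == c (mod p^k).  (Given that the limit exists, this is equivalent to
  "lim f(n) == c (mod p^k)" in Z_p.)\<close>
definition padic_lim_cong :: "nat \<Rightarrow> (nat \<Rightarrow> rat) \<Rightarrow> rat \<Rightarrow> nat \<Rightarrow> rat \<Rightarrow> bool" where
  "padic_lim_cong p f x k c \<longleftrightarrow>
     (\<exists>N. \<forall>n::nat. qcong p N (of_nat n) x \<longrightarrow> qcong p k (f n) c)"

end

theory Submission
  imports Defs "HOL-Number_Theory.Residues"
begin

definition pint :: "nat \<Rightarrow> rat \<Rightarrow> bool" where
  "pint p x \<longleftrightarrow> (\<exists>a b :: int. \<not> int p dvd b \<and> of_int b * x = of_int a)"

definition cg :: "nat \<Rightarrow> nat \<Rightarrow> rat \<Rightarrow> rat \<Rightarrow> bool" where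
  "cg p k x y \<longleftrightarrow> (\<exists>z. pint p z \<and> x - y = of_nat p ^ k * z)"

locale pp =
  fixes p :: nat
  assumes prime: "prime p" and p5: "5 \<le> p"
begin

lemma ppos: "(of_nat p :: rat) \<noteq> 0" using p5 by simp

lemma pint_int[simp]: "pint p (of_int a)"
  unfolding pint_def by (rule exI[of _ a], rule exI[of _ 1]) (use p5 in auto)

lemma pint_nat[simp]: "pint p (of_nat a)"
  using pint_int[of "int a"] by simp

lemma pint_numeral[simp]: "pint p (numeral a)"
  using pint_nat[of "numeral a"] by simp

lemma pint_0[simp]: "pint p 0" and pint_1[simp]: "pint p 1"
  using pint_nat[of 0] pint_nat[of 1] by auto

lemma not_dvd_mult: "\<not> int p dvd b \<Longrightarrow> \<not> int p dvd d \<Longrightarrow> \<not> int p dvd (b * d)"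
  using prime by (meson prime_dvd_mult_iff prime_nat_int_transfer)

lemma pint_add[intro]: assumes "pint p x" "pint p y" shows "pint p (x + y)"
proof -
  obtain a b where 1: "\<not> int p dvd b" "of_int b * x = of_int a" using assms(1) pint_def by auto
  obtain c d where 2: "\<not> int p dvd d" "of_int d * y = of_int c" using assms(2) pint_def by auto
  have "of_int (b*d) * (x + y) = of_int (a * d + c * b)"
    using 1 2 by (simp add: algebra_simps)
  then show ?thesis unfolding pint_def using not_dvd_mult[OF 1(1) 2(1)] by blast
qed

lemma pint_mult[intro]: assumes "pint p x" "pint p y" shows "pint p (x * y)"
proof -
  obtain a b where 1: "\<not> int p dvd b" "of_int b * x = of_int a" using assms(1) pint_def by auto
  obtain c d where 2: "\<not> int p dvd d" "of_int d * y = of_int c" using assms(2) pint_def by auto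
  have "of_int (b*d) * (x * y) = of_int (a * c)"
    using 1 2 by (simp add: algebra_simps)
  then show ?thesis unfolding pint_def using not_dvd_mult[OF 1(1) 2(1)] by blast
qed

lemma pint_uminus[intro]: assumes "pint p x" shows "pint p (- x)"
  using pint_mult[OF pint_int[of "-1"] assms] by simp

lemma pint_diff[intro]: "pint p x \<Longrightarrow> pint p y \<Longrightarrow> pint p (x - y)"
  using pint_add[of x "-y"] pint_uminus[of y] by simp

lemma pint_pow[intro]: "pint p x \<Longrightarrow> pint p (x ^ n)"
  by (induction n) auto

lemma pint_ppow[simp]: "pint p (of_nat p ^ n)"
  by (intro pint_pow pint_nat)

lemma pint_sum[intro]: "(\<And>i. i \<in> A \<Longrightarrow> pint p (f i)) \<Longrightarrow> pint p (sum f A)"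
  by (induction A rule: infinite_finite_induct) auto

lemma pint_prod[intro]: "(\<And>i. i \<in> A \<Longrightarrow> pint p (f i)) \<Longrightarrow> pint p (prod f A)"
  by (induction A rule: infinite_finite_induct) auto

lemma pint_div_int[intro]: assumes "pint p x" "\<not> int p dvd b" shows "pint p (x / of_int b)"
proof -
  obtain a c where 1: "\<not> int p dvd c" "of_int c * x = of_int a" using assms(1) pint_def by auto
  have "b \<noteq> 0" using assms by auto
  then have "of_int (c*b) * (x / of_int b) = of_int a" using 1 by simp
  then show ?thesis unfolding pint_def using not_dvd_mult[OF 1(1) assms(2)] by blast
qed

lemma pint_div_nat[intro]: "pint p x \<Longrightarrow> \<not> p dvd b \<Longrightarrow> pint p (x / of_nat b)"
  using pint_div_int[of x "int b"] by simp

lemma pint_inv_nat[intro]: "\<not> p dvd b \<Longrightarrow> pint p (1 / of_nat b)"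
  using pint_div_nat[of 1 b] by simp

lemma pint_div_unit: assumes "pint p x" "pint p y" "pint p (1/y)" shows "pint p (x / y)"
  using pint_mult[OF assms(1) assms(3)] by simp

lemma cg_refl[simp]: "cg p k x x" unfolding cg_def by (rule exI[of _ 0]) auto

lemma cg_sym: "cg p k x y \<Longrightarrow> cg p k y x"
  unfolding cg_def by (metis minus_diff_eq mult_minus_right pint_uminus)

lemma cg_trans[trans]: "cg p k x y \<Longrightarrow> cg p k y z \<Longrightarrow> cg p k x z"
  unfolding cg_def
proof (elim exE conjE)
  fix u v assume "pint p u" "x - y = of_nat p ^ k * u" "pint p v" "y - z = of_nat p ^ k * v"
  then show "\<exists>w. pint p w \<and> x - z = of_nat p ^ k * w"
    by (intro exI[of _ "u+v"]) (auto simp: algebra_simps)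
qed

lemma cg_add: "cg p k x y \<Longrightarrow> cg p k u v \<Longrightarrow> cg p k (x + u) (y + v)"
  unfolding cg_def
proof (elim exE conjE)
  fix a b assume "pint p a" "x - y = of_nat p ^ k * a" "pint p b" "u - v = of_nat p ^ k * b"
  then show "\<exists>w. pint p w \<and> x + u - (y + v) = of_nat p ^ k * w"
    by (intro exI[of _ "a+b"]) (auto simp: algebra_simps)
qed

lemma cg_uminus: "cg p k x y \<Longrightarrow> cg p k (-x) (-y)"
  unfolding cg_def by (metis minus_diff_eq minus_diff_minus mult_minus_right pint_uminus)

lemma cg_diff: "cg p k x y \<Longrightarrow> cg p k u v \<Longrightarrow> cg p k (x - u) (y - v)"
  using cg_add[of k x y "-u" "-v"] cg_uminus by simp

lemma cg_mult: assumes "cg p k x y" "cg p k u v" "pint p x" "pint p v"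
  shows "cg p k (x * u) (y * v)"
  using assms unfolding cg_def
proof (elim exE conjE)
  fix a b assume "pint p a" "x - y = of_nat p ^ k * a" "pint p b" "u - v = of_nat p ^ k * b"
  moreover assume "pint p a" "x - y = of_nat p ^ k * a" "pint p b" "u - v = of_nat p ^ k * b"
  ultimately have "x * u - y * v = of_nat p ^ k * (x*b + a*v)"
    by (simp add: algebra_simps)
  moreover have "pint p (x*b + a*v)" using assms(3,4) \<open>pint p a\<close> \<open>pint p b\<close> by auto
  ultimately show "\<exists>w. pint p w \<and> x * u - y * v = of_nat p ^ k * w" by blast
qed

lemma cg_pint: "cg p k x y \<Longrightarrow> pint p y \<Longrightarrow> pint p x"
  unfolding cg_def by (metis add.commute diff_add_cancel pint_add pint_mult pint_pow pint_nat of_nat_power)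

lemma cg_mult': assumes "cg p k x y" "cg p k u v" "pint p y" "pint p v"
  shows "cg p k (x * u) (y * v)"
  using cg_mult[OF assms(1,2) cg_pint[OF assms(1,3)] assms(4)] .

lemma cg_multl: "cg p k x y \<Longrightarrow> pint p c \<Longrightarrow> cg p k (c * x) (c * y)"
  unfolding cg_def
proof (elim exE conjE)
  fix z assume "pint p z" "x - y = of_nat p ^ k * z" "pint p c"
  then have "c * x - c * y = of_nat p ^ k * (c * z)" by (simp add: algebra_simps)
  then show "\<exists>w. pint p w \<and> c * x - c * y = of_nat p ^ k * w" using \<open>pint p z\<close> \<open>pint p c\<close> by blast
qed

lemma cg_pow: "cg p k x y \<Longrightarrow> pint p y \<Longrightarrow> cg p k (x ^ n) (y ^ n)"
proof (induction n)
  case (Suc n)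
  have "cg p k (x * x ^ n) (y * y ^ n)" by (rule cg_mult') (use Suc in auto)
  then show ?case by simp
qed simp

lemma cg_sum: "(\<And>i. i \<in> A \<Longrightarrow> cg p k (f i) (g i)) \<Longrightarrow> cg p k (sum f A) (sum g A)"
  by (induction A rule: infinite_finite_induct) (auto intro: cg_add)

lemma cg_prod: "(\<And>i. i \<in> A \<Longrightarrow> cg p k (f i) (g i)) \<Longrightarrow> (\<And>i. i \<in> A \<Longrightarrow> pint p (g i))
   \<Longrightarrow> cg p k (prod f A) (prod g A)"
  by (induction A rule: infinite_finite_induct) (auto intro!: cg_mult' pint_prod)

lemma cg_mono: "cg p k x y \<Longrightarrow> j \<le> k \<Longrightarrow> cg p j x y"
  unfolding cg_def
proof (elim exE conjE)
  fix z assume "pint p z" "x - y = of_nat p ^ k * z" "j \<le> k"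
  then show "\<exists>w. pint p w \<and> x - y = of_nat p ^ j * w"
    by (intro exI[of _ "of_nat p ^ (k - j) * z"])
       (auto simp: power_add[symmetric] mult.assoc[symmetric] intro!: pint_mult)
qed

lemma cg_pmult: "cg p k x y \<Longrightarrow> cg p (k + j) (of_nat p ^ j * x) (of_nat p ^ j * y)"
  unfolding cg_def
proof (elim exE conjE)
  fix z assume "pint p z" "x - y = of_nat p ^ k * z"
  then show "\<exists>w. pint p w \<and> of_nat p ^ j * x - of_nat p ^ j * y = of_nat p ^ (k + j) * w"
    by (intro exI[of _ z]) (auto simp: power_add right_diff_distrib[symmetric])
qed

lemma cg_zero: "pint p z \<Longrightarrow> cg p k (of_nat p ^ k * z) 0"
  unfolding cg_def by auto

lemma cg_0: "cg p 0 x y \<longleftrightarrow> pint p (x - y)"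
  unfolding cg_def by auto

lemma cg_int: "int p ^ k dvd (a - b) \<Longrightarrow> cg p k (of_int a) (of_int b)"
  unfolding cg_def dvd_def
proof (elim exE)
  fix c assume "a - b = int p ^ k * c"
  then have "(of_int a :: rat) - of_int b = of_nat p ^ k * of_int c"
    by (metis of_int_diff of_int_mult of_int_of_nat_eq of_int_power)
  then show "\<exists>z. pint p z \<and> of_int a - of_int b = of_nat p ^ k * z" using pint_int by blast
qed

lemma not_dvd_2: "\<not> p dvd 2" using p5 by (auto dest!: dvd_imp_le)
lemma not_dvd_3: "\<not> p dvd 3" using p5 by (auto dest!: dvd_imp_le)
lemma pint_half[intro]: "pint p x \<Longrightarrow> pint p (x / 2)"
  using pint_div_nat[of x 2] not_dvd_2 by simp
lemma pint_third[intro]: "pint p x \<Longrightarrow> pint p (x / 3)"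
  using pint_div_nat[of x 3] not_dvd_3 by simp

definition NF :: "rat \<Rightarrow> rat \<Rightarrow> rat" where
  "NF x y = 1 + of_nat p * x + of_nat p ^ 2 * y"

lemma pint_NF[intro]: "pint p x \<Longrightarrow> pint p y \<Longrightarrow> pint p (NF x y)"
  unfolding NF_def by (intro pint_add pint_mult) auto

lemma NF_mult: assumes "pint p x" "pint p y" "pint p u" "pint p v"
  shows "cg p 3 (NF x y * NF u v) (NF (x+u) (y+v+x*u))"
  unfolding cg_def
proof (intro exI conjI)
  show "pint p (x*v + y*u + of_nat p*y*v)" using assms by (intro pint_add pint_mult) auto
  show "NF x y * NF u v - NF (x + u) (y + v + x * u) = of_nat p ^ 3 * (x*v + y*u + of_nat p*y*v)"
    unfolding NF_def by (simp add: algebra_simps power2_eq_square power3_eq_cube)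
qed

lemma NF_pow: assumes "pint p x" "pint p y"
  shows "cg p 3 (NF x y ^ n) (NF (of_nat n * x) (of_nat n * y + (of_nat n * (of_nat n - 1) / 2) * x^2))"
proof (induction n)
  case 0
  then show ?case by (simp add: NF_def)
next
  case (Suc n)
  let ?a = "of_nat n * x" and ?b = "of_nat n * y + (of_nat n * (of_nat n - 1) / 2) * x^2"
  have pa: "pint p ?a" "pint p ?b" using assms by (auto intro!: pint_add pint_mult pint_half pint_diff)
  have "cg p 3 (NF x y ^ n * NF x y) (NF ?a ?b * NF x y)"
    by (rule cg_mult') (use Suc pa assms in auto)
  also have "cg p 3 (NF ?a ?b * NF x y) (NF (?a + x) (?b + y + ?a * x))"
    by (rule NF_mult) (use pa assms in auto)
  also have "NF (?a + x) (?b + y + ?a * x) = NF (of_nat (Suc n) * x) (of_nat (Suc n) * y + (of_nat (Suc n) * (of_nat (Suc n) - 1) / 2) * x^2)"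
    by (rule arg_cong2[where f=NF]) (simp_all add: field_simps power2_eq_square)
  finally show ?case by (simp add: mult.commute)
qed

lemma NF_eq: assumes "cg p 2 (x - x') (of_nat p * z)" "cg p 1 (y + z) y'"
  shows "cg p 3 (NF x y) (NF x' y')"
proof -
  obtain a where a: "pint p a" "x - x' - of_nat p * z = of_nat p ^ 2 * a" using assms(1) cg_def by auto
  obtain b where b: "pint p b" "y + z - y' = of_nat p * b" using assms(2) cg_def by auto
  have "NF x y - NF x' y' = of_nat p ^ 3 * (a + b)"
    unfolding NF_def
  proof -
    have "x - x' = of_nat p * z + of_nat p ^ 2 * a" using a by (simp add: algebra_simps)
    moreover have "y - y' = of_nat p * b - z" using b by (simp add: algebra_simps)
    ultimately have "of_nat p * (x - x') + of_nat p ^ 2 * (y - y') = of_nat p * (of_nat p * z + of_nat p ^ 2 * a) + of_nat p ^ 2 * (of_nat p * b - z)"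
      by simp
    also have "\<dots> = of_nat p ^ 3 * (a + b)" by (simp add: algebra_simps power2_eq_square power3_eq_cube)
    finally have "of_nat p * (x - x') + of_nat p ^ 2 * (y - y') = of_nat p ^ 3 * (a + b)" .
    then show "1 + of_nat p * x + of_nat p ^ 2 * y - (1 + of_nat p * x' + of_nat p ^ 2 * y') = of_nat p ^ 3 * (a + b)"
      by (simp add: algebra_simps)
  qed
  then show ?thesis unfolding cg_def using a(1) b(1) by blast
qed

lemma prod_expand:
  assumes "finite A" "\<And>i. i \<in> A \<Longrightarrow> pint p (f i)"
  shows "cg p 3 (\<Prod>i\<in>A. 1 + of_nat p * f i) (NF (sum f A) (((sum f A)^2 - (\<Sum>i\<in>A. (f i)^2)) / 2))"
  using assms
proof (induction A rule: finite_induct)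
  case empty
  then show ?case by (simp add: NF_def)
next
  case (insert a A)
  let ?S = "sum f A" and ?E = "((sum f A)^2 - (\<Sum>i\<in>A. (f i)^2)) / 2"
  have pS: "pint p ?S" "pint p ?E" "pint p (f a)" using insert by (auto intro!: pint_sum pint_half pint_diff pint_pow)
  have "(\<Prod>i\<in>insert a A. 1 + of_nat p * f i) = NF (f a) 0 * (\<Prod>i\<in>A. 1 + of_nat p * f i)"
    using insert by (simp add: NF_def)
  also have "cg p 3 \<dots> (NF (f a) 0 * NF ?S ?E)"
    by (rule cg_mult') (use insert pS in auto)
  also have "cg p 3 \<dots> (NF (f a + ?S) (0 + ?E + f a * ?S))"
    by (rule NF_mult) (use pS in auto)
  also have "NF (f a + ?S) (0 + ?E + f a * ?S) = NF (sum f (insert a A)) (((sum f (insert a A))^2 - (\<Sum>i\<in>insert a A. (f i)^2)) / 2)"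
    using insert by (simp add: algebra_simps power2_eq_square add_divide_distrib diff_divide_distrib)
  finally show ?case .
qed

end

lemma prod_split: "(\<Prod>k<a+b. f k) = (\<Prod>k<a. f k) * (\<Prod>k<b. f (a+k))"
  for f :: "nat \<Rightarrow> 'a::comm_monoid_mult"
  by (induction b) (simp_all add: ac_simps)

lemma sum_split: "(\<Sum>k<a+b. f k) = (\<Sum>k<a. f k) + (\<Sum>k<b. f (a+k))"
  for f :: "nat \<Rightarrow> 'a::comm_monoid_add"
  by (induction b) (simp_all add: ac_simps)

lemma prod_split3: "(\<Prod>k<3*m. f k) = (\<Prod>j<m. f (3*j) * f (3*j+1) * f (3*j+2))"
  for f :: "nat \<Rightarrow> 'a::comm_monoid_mult"
proof (induction m)
  case (Suc m)
  have "3 * Suc m = 3*m + 3" by simp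
  then show ?case using Suc by (simp only: prod_split) (simp add: eval_nat_numeral ac_simps)
qed simp

lemma sum_split3: "(\<Sum>k<3*m. f k) = (\<Sum>j<m. f (3*j) + f (3*j+1) + f (3*j+2))"
  for f :: "nat \<Rightarrow> 'a::comm_monoid_add"
proof (induction m)
  case (Suc m)
  have "3 * Suc m = 3*m + 3" by simp
  then show ?case using Suc by (simp only: sum_split) (simp add: eval_nat_numeral ac_simps)
qed simp

context pp
begin

lemma ndvd_off: "0 < s \<Longrightarrow> s < p \<Longrightarrow> \<not> p dvd (j*p + s)"
proof
  assume "0 < s" "s < p" "p dvd (j*p + s)"
  then have "p dvd s" by (simp add: dvd_add_right_iff)
  then show False using \<open>0 < s\<close> \<open>s < p\<close> by (auto dest: dvd_imp_le)
qed

definition hh :: "nat \<Rightarrow> nat" where "hh k = (if 1 \<le> k \<and> \<not> p dvd k then k else 1)"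

lemma gamma_prod: "padic_gamma_nat p n = (-1)^n * int (\<Prod>k<n. hh k)"
proof -
  have "(\<Prod>k<n. hh k) = (\<Prod>k\<in>{k\<in>{..<n}. 1 \<le> k \<and> \<not> p dvd k}. k)"
    unfolding hh_def by (subst prod.inter_filter) auto
  moreover have "{k\<in>{..<n}. 1 \<le> k \<and> \<not> p dvd k} = {k. 1 \<le> k \<and> k < n \<and> \<not> p dvd k}" by auto
  ultimately show ?thesis unfolding padic_gamma_nat_def by (simp add: of_nat_prod)
qed

lemma gamma6: "(of_int (padic_gamma_nat p n) :: rat) ^ 6 = (\<Prod>k<n. of_nat (hh k)) ^ 6"
proof -
  have "((-1::rat)^n)^6 = 1" by (simp add: power_mult[symmetric] mult.commute[of n] power_mult)
  then show ?thesis unfolding gamma_prod by (simp add: power_mult_distrib of_nat_prod)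
qed

definition W :: rat where "W = (\<Prod>i<p-1. of_nat (i+1))"

lemma block: "(\<Prod>r<p. (of_nat (hh (j*p + r)) :: rat)) = (\<Prod>i<p-1. of_nat (j*p + (i+1)))"
proof -
  have p: "p = Suc (p-1)" using p5 by simp
  have "hh (j*p) = 1" unfolding hh_def by auto
  moreover have "hh (j*p + Suc i) = j*p + (i+1)" if "i < p - 1" for i
  proof -
    have "\<not> p dvd (j*p + Suc i)"
      using that by (intro ndvd_off) auto
    then show ?thesis unfolding hh_def by simp
  qed
  ultimately show ?thesis
    by (subst p, subst prod.lessThan_Suc_shift) (simp add: p[symmetric])
qed

lemma gamma_decomp:
  assumes "1 \<le> r" "r \<le> p"
  shows "(\<Prod>k<q*p + r. (of_nat (hh k) :: rat)) =
     (\<Prod>j<q. \<Prod>i<p-1. of_nat (j*p + (i+1))) * (\<Prod>i<r-1. of_nat (q*p + (i+1)))"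
proof -
  have A: "(\<Prod>k<q*p. (of_nat (hh k) :: rat)) = (\<Prod>j<q. \<Prod>i<p-1. of_nat (j*p + (i+1)))"
  proof (induction q)
    case (Suc q)
    have "(\<Prod>k<Suc q*p. (of_nat (hh k) :: rat)) = (\<Prod>k<q*p + p. (of_nat (hh k) :: rat))" by (simp add: add.commute)
    also have "\<dots> = (\<Prod>k<q*p. of_nat (hh k)) * (\<Prod>r<p. of_nat (hh (q*p + r)))" by (rule prod_split)
    also have "\<dots> = (\<Prod>j<q. \<Prod>i<p-1. of_nat (j*p + (i+1))) * (\<Prod>i<p-1. of_nat (q*p + (i+1)))"
      by (simp only: Suc block)
    finally show ?case by simp
  qed simp
  have "hh (q*p) = 1" unfolding hh_def by auto
  moreover have "hh (q*p + Suc i) = q*p + (i+1)" if "i < r - 1" for i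
  proof -
    have "\<not> p dvd (q*p + Suc i)"
      using that assms by (intro ndvd_off) auto
    then show ?thesis unfolding hh_def by simp
  qed
  moreover have r: "r = Suc (r - 1)" using assms by simp
  ultimately have B: "(\<Prod>k<r. (of_nat (hh (q*p + k)) :: rat)) = (\<Prod>i<r-1. of_nat (q*p + (i+1)))"
    by (subst r, subst prod.lessThan_Suc_shift) simp
  show ?thesis using A B by (simp add: prod_split)
qed

lemma pint_inv_small[intro]: "0 < x \<Longrightarrow> x < p \<Longrightarrow> pint p (1 / of_nat x)"
  by (rule pint_inv_nat) (auto dest: dvd_imp_le)

lemma prod_shift_expand:
  fixes n :: nat and g :: "nat \<Rightarrow> nat"
  assumes "\<And>i. i < n \<Longrightarrow> 0 < g i \<and> g i < p" "pint p c"
  shows "cg p 3 (\<Prod>i<n. of_nat (g i) + of_nat p * c)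
     ((\<Prod>i<n. of_nat (g i)) * NF (c * (\<Sum>i<n. 1/of_nat (g i)))
        ((c^2 * (\<Sum>i<n. 1/of_nat (g i))^2 - c^2 * (\<Sum>i<n. 1/(of_nat (g i))^2)) / 2))"
proof -
  have "(\<Prod>i<n. of_nat (g i) + of_nat p * c) = (\<Prod>i<n. (of_nat (g i)::rat)) * (\<Prod>i<n. 1 + of_nat p * (c / of_nat (g i)))"
    by (subst prod.distrib[symmetric], rule prod.cong) (use assms in \<open>auto simp: field_simps\<close>)
  also have "cg p 3 \<dots> ((\<Prod>i<n. of_nat (g i)) * NF (\<Sum>i<n. c / of_nat (g i))
        (((\<Sum>i<n. c / of_nat (g i))^2 - (\<Sum>i<n. (c / of_nat (g i))^2)) / 2))"
  proof (rule cg_multl, rule prod_expand)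
    fix i assume "i \<in> {..<n}"
    then have "\<not> p dvd g i" using assms(1)[of i] by (auto dest: dvd_imp_le)
    then show "pint p (c / of_nat (g i))" using assms(2) by (rule pint_div_nat[rotated])
  qed (auto intro!: pint_prod)
  also have "(\<Sum>i<n. c / of_nat (g i)) = c * (\<Sum>i<n. 1/of_nat (g i))"
    by (simp add: sum_distrib_left)
  also have "(\<Sum>i<n. (c / of_nat (g i))^2) = c^2 * (\<Sum>i<n. 1/(of_nat (g i))^2)"
    by (simp add: sum_distrib_left power_divide)
  finally show ?thesis by (simp add: power_mult_distrib right_diff_distrib)
qed

end

context pp
begin

abbreviation P :: rat where "P \<equiv> of_nat p"

lemma inv_cong:
  fixes a b :: nat
  assumes "a mod p = b mod p" "\<not> p dvd a" "\<not> p dvd b"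
  shows "cg p 1 (1/of_nat a) (1/of_nat b)"
proof -
  have a0: "a \<noteq> 0" "b \<noteq> 0" using assms(2,3) dvd_0_right by metis+
  have ea: "(of_nat a :: rat) = P * of_nat (a div p) + of_nat (a mod p)"
    using mult_div_mod_eq[of p a] by (metis of_nat_add of_nat_mult)
  have eb: "(of_nat b :: rat) = P * of_nat (b div p) + of_nat (b mod p)"
    using mult_div_mod_eq[of p b] by (metis of_nat_add of_nat_mult)
  have e: "(of_nat b :: rat) - of_nat a = P * (of_nat (b div p) - of_nat (a div p))"
    using ea eb assms(1) by (simp add: algebra_simps)
  have "1/of_nat a - 1/(of_nat b::rat) = (of_nat b - of_nat a) / (of_nat a * of_nat b)"
    using a0 by (simp add: field_simps)
  also have "\<dots> = P * ((of_nat (b div p) - of_nat (a div p)) / (of_nat a * of_nat b))"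
    by (simp add: e)
  finally have "1/of_nat a - 1/(of_nat b::rat) = P ^ 1 * ((of_nat (b div p) - of_nat (a div p)) / of_nat (a * b))"
    by simp
  moreover have "\<not> p dvd (a * b)" using assms prime by (simp add: prime_dvd_mult_iff)
  moreover have "pint p (of_nat (b div p) - of_nat (a div p))" by auto
  ultimately show ?thesis unfolding cg_def using pint_div_nat by blast
qed

lemma sum_shift1: "(\<Sum>i<p-1. f (i+1)) = (\<Sum>r\<in>{1..<p}. f r)"
proof -
  have "{1..<p} = Suc ` {..<p-1}"
  proof
    show "{1..<p} \<subseteq> Suc ` {..<p-1}"
    proof
      fix x assume "x \<in> {1..<p}"
      then have "x = Suc (x - 1)" "x - 1 \<in> {..<p-1}" by auto
      then show "x \<in> Suc ` {..<p-1}" by (metis imageI)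
    qed
  qed auto
  then show ?thesis by (simp add: sum.reindex)
qed

definition T :: rat where "T = (\<Sum>i<p-1. 1/(of_nat (i+1))^2)"
definition H :: rat where "H = (\<Sum>i<p-1. 1/of_nat (i+1))"

lemma pint_inv_succ: "i < p - 1 \<Longrightarrow> pint p (1/of_nat (i+1))"
  by (rule pint_inv_small) auto
lemma pint_inv_succ2: "i < p - 1 \<Longrightarrow> pint p (1/(of_nat (i+1))^2)"
  using pint_pow[OF pint_inv_succ, of i 2] by (simp add: power_one_over)
lemma pint_T: "pint p T" unfolding T_def by (rule pint_sum, rule pint_inv_succ2) auto
lemma pint_H: "pint p H" unfolding H_def by (rule pint_sum, rule pint_inv_succ) auto

lemma T0: "cg p 1 T 0"
proof -
  let ?A = "{1..<p}" and ?g = "\<lambda>r. (2*r) mod p" and ?f = "\<lambda>r::nat. 1/(of_nat r)^2 :: rat"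
  have cop: "coprime 2 p" using prime_imp_coprime[OF prime not_dvd_2] by (simp add: coprime_commute)
  have ndv: "\<not> p dvd (2*r)" if "r \<in> ?A" for r
    using that prime not_dvd_2 by (auto simp: prime_dvd_mult_iff dest: dvd_imp_le)
  have inj: "inj_on ?g ?A"
  proof
    fix r s assume rs: "r \<in> ?A" "s \<in> ?A" "?g r = ?g s"
    then have "[2*r = 2*s] (mod p)" by (simp add: cong_def)
    then have "[r = s] (mod p)" using cong_mult_lcancel_nat[OF cop] by simp
    then show "r = s" using rs by (auto intro: cong_less_modulus_unique_nat)
  qed
  have sub: "?g ` ?A \<subseteq> ?A"
  proof
    fix y assume "y \<in> ?g ` ?A"
    then obtain r where r: "r \<in> ?A" "y = ?g r" by auto
    then have "y \<noteq> 0" using ndv[OF r(1)] by (auto simp: dvd_eq_mod_eq_0)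
    moreover have "y < p" using r p5 by simp
    ultimately show "y \<in> ?A" by simp
  qed
  have img: "?g ` ?A = ?A" using endo_inj_surj[OF _ sub inj] by simp
  have TA: "T = sum ?f ?A" unfolding T_def using sum_shift1[of ?f] by simp
  have "sum ?f ?A = sum ?f (?g ` ?A)" using img by simp
  also have "\<dots> = (\<Sum>r\<in>?A. ?f (?g r))" by (subst sum.reindex[OF inj]) (simp add: comp_def)
  also have "cg p 1 \<dots> (\<Sum>r\<in>?A. ?f (2*r))"
  proof (rule cg_sum)
    fix r assume r: "r \<in> ?A"
    have "?g r \<noteq> 0" using ndv[OF r] by (auto simp: dvd_eq_mod_eq_0)
    then have c: "cg p 1 (1/of_nat (?g r)) (1/of_nat (2*r))"
      by (rule_tac inv_cong) (use ndv[OF r] in \<open>auto simp: dvd_eq_mod_eq_0\<close>)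
    have "cg p 1 ((1/of_nat (?g r))^2) ((1/of_nat (2*r))^2)"
      by (rule cg_pow[OF c]) (rule pint_inv_nat[OF ndv[OF r]])
    then show "cg p 1 (?f (?g r)) (?f (2*r))" by (simp add: power_one_over)
  qed
  also have "(\<Sum>r\<in>?A. ?f (2*r)) = sum ?f ?A / 4"
    by (simp add: sum_divide_distrib power_mult_distrib mult.commute)
  finally have c1: "cg p 1 T (T / 4)" using TA by simp
  have "cg p 1 (T - T/4) (T/4 - T/4)" by (rule cg_diff[OF c1]) simp
  then have "cg p 1 (4/3 * (T - T/4)) (4/3 * 0)" by (intro cg_multl) (auto intro!: pint_third)
  then show ?thesis by simp
qed

lemma reflect_inv:
  assumes "0 < x" "x < p"
  shows "cg p 2 (1/(P - of_nat x)) (-1/of_nat x - P/(of_nat x)^2)"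
proof -
  have px: "P - of_nat x = of_nat (p - x)" using assms by simp
  have nz: "(of_nat x::rat) \<noteq> 0" "P - of_nat x \<noteq> 0" using assms by auto
  have "1/(P - of_nat x) - (-1/of_nat x - P/(of_nat x)^2) = P^2 * (1/(of_nat x^2 * of_nat (p - x)))"
    using nz unfolding px[symmetric] by (simp add: field_simps power2_eq_square)
  moreover have "pint p (1/(of_nat x^2 * of_nat (p - x)))"
  proof -
    have "\<not> p dvd (x^2 * (p - x))" using assms prime
      by (auto simp: prime_dvd_mult_iff prime_dvd_power_iff dest: dvd_imp_le)
    then show ?thesis using pint_inv_nat[of "x^2 * (p-x)"] by simp
  qed
  ultimately show ?thesis unfolding cg_def by blast
qed

lemma reflect_inv2:
  assumes "0 < x" "x < p"
  shows "cg p 1 (1/(P - of_nat x)^2) (1/(of_nat x)^2)"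
proof -
  have px: "P - of_nat x = of_nat (p - x)" using assms by simp
  have nz: "(of_nat x::rat) \<noteq> 0" "P - of_nat x \<noteq> 0" using assms by auto
  have "1/(P - of_nat x)^2 - 1/(of_nat x)^2 = ((of_nat x)^2 - (P - of_nat x)^2)/(of_nat x^2 * (P - of_nat x)^2)"
    using nz by (simp add: field_simps)
  also have "(of_nat x)^2 - (P - of_nat x)^2 = P * (2 * of_nat x - P)"
    by (simp add: algebra_simps power2_eq_square)
  finally have "1/(P - of_nat x)^2 - 1/(of_nat x)^2 = P * ((2 * of_nat x - P)/(of_nat x^2 * of_nat (p - x)^2))"
    unfolding px by simp
  moreover have "pint p ((2 * of_nat x - P)/(of_nat x^2 * of_nat (p - x)^2))"
  proof -
    have "\<not> p dvd (x^2 * (p - x)^2)" using assms prime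
      by (auto simp: prime_dvd_mult_iff prime_dvd_power_iff dest: dvd_imp_le)
    moreover have "pint p (2 * of_nat x - P)" by (intro pint_diff pint_mult pint_numeral pint_nat)
    ultimately show ?thesis using pint_div_nat[of "2 * of_nat x - P" "x^2 * (p-x)^2"] by simp
  qed
  ultimately show ?thesis unfolding cg_def by auto
qed

lemma sum_reflect: "(\<Sum>i<n. f (n - Suc i)) = (\<Sum>i<n. f i)"
  by (rule sum.nat_diff_reindex)

lemma H0: "cg p 2 H 0"
proof -
  have "H = (\<Sum>i<p-1. 1/of_nat ((p - 1 - Suc i) + 1))" unfolding H_def
    using sum_reflect[of "\<lambda>i. 1/(of_nat (i+1)::rat)" "p-1"] by simp
  also have "\<dots> = (\<Sum>i<p-1. 1/(P - of_nat (i+1)))"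
    by (rule sum.cong) (use p5 in \<open>auto simp: of_nat_diff\<close>)
  also have "cg p 2 \<dots> (\<Sum>i<p-1. -1/of_nat (i+1) - P/(of_nat (i+1))^2)"
    by (rule cg_sum, rule reflect_inv) auto
  also have "(\<Sum>i<p-1. -1/of_nat (i+1) - P/(of_nat (i+1))^2) = - H - P * T"
    unfolding H_def T_def by (simp add: sum_subtractf sum_negf sum_distrib_left)
  finally have c: "cg p 2 H (- H - P * T)" .
  have "cg p (1+1) (P^1 * T) (P^1 * 0)" by (rule cg_pmult[OF T0])
  then have pt: "cg p 2 (P * T) 0" by (simp only: one_add_one power_one_right mult_zero_right)
  have "cg p 2 (H + H) (- H - P * T + H)" by (rule cg_add[OF c]) simp
  also have "- H - P * T + H = - (P * T)" by simp
  also have "cg p 2 \<dots> (-0)" by (rule cg_uminus[OF pt])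
  finally have "cg p 2 (1/2 * (H + H)) (1/2 * 0)" by (intro cg_multl) (auto intro!: pint_half)
  then show ?thesis by simp
qed

lemma W_fact: "W = of_nat (fact (p - 1))"
proof -
  have "(\<Prod>i<n. of_nat (i+1) :: rat) = of_nat (fact n)" for n
    by (induction n) (simp_all add: algebra_simps)
  then show ?thesis unfolding W_def by simp
qed

lemma pint_W: "pint p W" unfolding W_fact by (rule pint_nat)

lemma wilson: "cg p 1 W (-1)"
proof -
  have "[int (fact (p - 1)) = - 1] (mod int p)" using wilson_theorem[OF prime] by (simp add: of_nat_fact)
  then have "int p ^ 1 dvd (int (fact (p - 1)) - (-1))" by (simp add: cong_iff_dvd_diff)
  from cg_int[OF this] show ?thesis unfolding W_fact by simp
qed

lemma block_cong: "cg p 3 (\<Prod>i<p-1. of_nat (j*p + (i+1))) W"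
proof -
  let ?c = "of_nat j :: rat"
  have "(\<Prod>i<p-1. (of_nat (j*p + (i+1)) :: rat)) = (\<Prod>i<p-1. of_nat (i+1) + P * ?c)"
    by (simp add: algebra_simps)
  also have "cg p 3 \<dots> (W * NF (?c * H) ((?c^2 * H^2 - ?c^2 * T) / 2))"
    using prod_shift_expand[of "p-1" "\<lambda>i. i+1" ?c] unfolding W_def H_def T_def by auto
  also have "cg p 3 (W * NF (?c * H) ((?c^2 * H^2 - ?c^2 * T) / 2)) (W * NF 0 0)"
  proof (rule cg_multl[OF NF_eq])
    show "cg p 2 (?c * H - 0) (P * 0)" using cg_multl[OF H0, of ?c] by simp
    have h1: "cg p 1 H 0" using cg_mono[OF H0] by simp
    have "cg p 1 (?c^2 * H^2 - ?c^2 * T) (?c^2 * 0^2 - ?c^2 * 0)"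
      by (intro cg_diff cg_multl cg_pow h1 T0) auto
    then have "cg p 1 (1/2 * (?c^2 * H^2 - ?c^2 * T)) (1/2 * 0)" by (intro cg_multl) (auto intro!: pint_half)
    then show "cg p 1 ((?c^2 * H^2 - ?c^2 * T) / 2 + 0) 0" by simp
  qed (rule pint_W)
  finally show ?thesis by (simp add: NF_def)
qed

lemma pow_p:
  assumes "pint p x" "cg p k x 1" "1 \<le> k"
  shows "cg p (k+1) (x ^ p) 1"
proof -
  obtain z where z: "pint p z" "x - 1 = P ^ k * z" using assms(2) cg_def by auto
  have "cg p 1 (\<Sum>i<p. x^i) (\<Sum>i<p. 1^i)"
    by (intro cg_sum cg_pow cg_mono[OF assms(2)]) (use assms in auto)
  then have "cg p 1 (\<Sum>i<p. x^i) (P * 1)" by simp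
  also have "cg p 1 (P * 1) 0" using cg_zero[of 1 1] by simp
  finally obtain w where w: "pint p w" "(\<Sum>i<p. x^i) = P * w" using cg_def by auto
  have "x ^ p - 1 = (x - 1) * (\<Sum>i<p. x^i)" by (rule power_diff_1_eq)
  also have "\<dots> = P^(k+1) * (z * w)" using z w by (simp add: algebra_simps)
  finally show ?thesis unfolding cg_def using z w by auto
qed

lemma pow_p2:
  assumes "pint p x" "cg p 1 x 1"
  shows "cg p 3 (x ^ (p^2)) 1"
proof -
  have "cg p (1+1) (x ^ p) 1" using pow_p[OF assms] by simp
  then have "cg p 2 (x ^ p) 1" by (simp only: one_add_one)
  from pow_p[OF _ this] have "cg p 3 ((x ^ p) ^ p) 1" using assms by auto
  then show ?thesis by (simp add: power_mult[symmetric] power2_eq_square)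
qed

end

context pp
begin

lemmas pint_simps[simp] = pint_add pint_mult pint_diff pint_uminus pint_pow pint_half pint_third

lemma cg_div2: "cg p k x y \<Longrightarrow> cg p k (x/2) (y/2)"
  using cg_multl[of k x y "1/2"] by simp

lemma NF_mult_cg:
  assumes "cg p 3 X (NF x y)" "cg p 3 Y (NF u v)" "pint p x" "pint p y" "pint p u" "pint p v"
  shows "cg p 3 (X * Y) (NF (x+u) (y+v+x*u))"
proof -
  have "cg p 3 (X * Y) (NF x y * NF u v)" by (rule cg_mult') (use assms in auto)
  also have "cg p 3 \<dots> (NF (x+u) (y+v+x*u))" by (rule NF_mult) (use assms in auto)
  finally show ?thesis .
qed

lemma NF_pow_cg:
  assumes "cg p 3 X (NF x y)" "pint p x" "pint p y"
  shows "cg p 3 (X ^ n) (NF (of_nat n * x) (of_nat n * y + (of_nat n * (of_nat n - 1) / 2) * x^2))"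
proof -
  have "cg p 3 (X ^ n) (NF x y ^ n)" by (rule cg_pow) (use assms in auto)
  also have "cg p 3 \<dots> (NF (of_nat n * x) (of_nat n * y + (of_nat n * (of_nat n - 1) / 2) * x^2))"
    by (rule NF_pow) (use assms in auto)
  finally show ?thesis .
qed

lemma cg_NF_arg: "cg p 3 X (NF x y) \<Longrightarrow> x = x' \<Longrightarrow> y = y' \<Longrightarrow> cg p 3 X (NF x' y')"
  by simp

lemma final_alg:
  fixes a b c0 d0 s2 t2 :: rat
  assumes pi: "pint p a" "pint p b" "pint p c0" "pint p d0" "pint p s2" "pint p t2"
    and R1: "cg p 2 a (-c0 - P*d0)"
    and R2: "cg p 2 (2*s2) (-P*t2)"
    and R3: "cg p 1 b d0"
    and R4: "cg p 1 (b + d0 + t2) 0"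
  shows "cg p 3 (NF (-c0) ((c0^2 - d0)/2) ^ 2 * NF a ((a^2 - b)/2) ^ 6)
                (NF 0 t2 * (NF s2 ((s2^2 - t2)/2) * NF (2*a) (2*a^2 - 2*b)) ^ 4)"
proof -
  have V2: "cg p 3 (NF (-c0) ((c0^2 - d0)/2) ^ 2) (NF (-2*c0) (2*c0^2 - d0))"
    by (rule cg_NF_arg[OF NF_pow_cg[OF cg_refl]]) (use pi in \<open>auto simp: field_simps power2_eq_square\<close>)
  have Q6: "cg p 3 (NF a ((a^2 - b)/2) ^ 6) (NF (6*a) (18*a^2 - 3*b))"
    by (rule cg_NF_arg[OF NF_pow_cg[OF cg_refl]]) (use pi in \<open>auto simp: field_simps power2_eq_square\<close>)
  have L: "cg p 3 (NF (-c0) ((c0^2 - d0)/2) ^ 2 * NF a ((a^2 - b)/2) ^ 6)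
      (NF (6*a - 2*c0) (2*c0^2 - d0 + 18*a^2 - 3*b - 12*a*c0))"
    by (rule cg_NF_arg[OF NF_mult_cg[OF V2 Q6]]) (use pi in \<open>auto simp: field_simps\<close>)
  let ?xE = "s2 + 2*a" and ?yE = "(s2^2 - t2)/2 + (2*a^2 - 2*b) + s2*(2*a)"
  have pE: "pint p ?xE" "pint p ?yE" using pi by auto
  have E: "cg p 3 (NF s2 ((s2^2 - t2)/2) * NF (2*a) (2*a^2 - 2*b)) (NF ?xE ?yE)"
    by (rule NF_mult) (use pi in auto)
  have E4: "cg p 3 ((NF s2 ((s2^2 - t2)/2) * NF (2*a) (2*a^2 - 2*b)) ^ 4) (NF (4 * ?xE) (4 * ?yE + 6 * ?xE^2))"
    by (rule cg_NF_arg[OF NF_pow_cg[OF E pE]]) (auto simp: field_simps)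
  have R: "cg p 3 (NF 0 t2 * (NF s2 ((s2^2 - t2)/2) * NF (2*a) (2*a^2 - 2*b)) ^ 4)
      (NF (4 * ?xE) (t2 + (4 * ?yE + 6 * ?xE^2)))"
    by (rule cg_NF_arg[OF NF_mult_cg[OF cg_refl E4]]) (use pi in auto)
  have S1: "cg p 1 c0 (-a)"
  proof -
    have "cg p 1 a (-c0 - P*d0)" using cg_mono[OF R1] by simp
    moreover have "cg p 1 (P*d0) 0" using cg_zero[of d0 1] pi by simp
    ultimately have "cg p 1 a (-c0 - 0)" using cg_diff[OF cg_refl] cg_trans by fastforce
    then show ?thesis using cg_uminus[of 1 a "-c0"] by (simp add: cg_sym)
  qed
  have S2: "cg p 1 d0 b" using R3 by (rule cg_sym)
  have S3: "cg p 1 s2 0"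
  proof -
    have "cg p 1 (2*s2) (-P*t2)" using cg_mono[OF R2] by simp
    moreover have "cg p 1 (-P*t2) 0" using cg_zero[of "-t2" 1] pi by auto
    ultimately have "cg p 1 (1/2 * (2*s2)) (1/2 * 0)" by (intro cg_multl) (auto intro: cg_trans)
    then show ?thesis by simp
  qed
  have S4: "cg p 1 t2 (-2*b)"
  proof -
    have "cg p 1 ((b + d0 + t2) - b - d0) (0 - b - b)"
      by (intro cg_diff R4 cg_refl S2)
    then show ?thesis by simp
  qed
  show ?thesis
  proof (rule cg_trans[OF L], rule cg_sym, rule cg_trans[OF R], rule NF_eq)
    let ?z = "2*d0 + 2*t2"
    show "cg p 2 (4 * ?xE - (6*a - 2*c0)) (P * (-?z))"
    proof -
      have c1: "cg p 2 (2 * (2*s2)) (2 * (-P*t2))" by (rule cg_multl[OF R2]) simp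
      have c2: "cg p 2 (2*a) (2*(-c0 - P*d0))" by (rule cg_multl[OF R1]) simp
      have "cg p 2 (2 * (2*s2) + 2 * a + 2 * c0) (2 * (-P*t2) + 2 * (-c0 - P*d0) + 2 * c0)"
        by (intro cg_add c1 c2 cg_refl)
      then show ?thesis by (simp add: algebra_simps)
    qed
    show "cg p 1 (t2 + (4 * ?yE + 6 * ?xE^2) + - ?z) (2*c0^2 - d0 + 18*a^2 - 3*b - 12*a*c0)"
    proof -
      obtain e1 where e1: "pint p e1" "c0 - (-a) = P^1 * e1" using S1 cg_def by blast
      obtain e2 where e2: "pint p e2" "d0 - b = P^1 * e2" using S2 cg_def by blast
      obtain e3 where e3: "pint p e3" "s2 - 0 = P^1 * e3" using S3 cg_def by blast
      obtain e4 where e4: "pint p e4" "t2 - (-2*b) = P^1 * e4" using S4 cg_def by blast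
      have sub: "c0 = -a + P*e1" "d0 = b + P*e2" "s2 = P*e3" "t2 = -2*b + P*e4"
        using e1 e2 e3 e4 by (simp_all add: algebra_simps)
      let ?Z = "-3*e4 + 8*P*e3^2 + 32*a*e3 - e2 + 16*a*e1 - 2*P*e1^2"
      have "t2 + (4 * ?yE + 6 * ?xE^2) + - ?z - (2*c0^2 - d0 + 18*a^2 - 3*b - 12*a*c0) = P^1 * ?Z"
        unfolding sub by (simp add: field_simps power2_eq_square)
      moreover have "pint p ?Z" using pi e1 e2 e3 e4 by simp
      ultimately show ?thesis unfolding cg_def by blast
    qed
  qed
qed

end

lemma prod_inv_rat: "(\<Prod>i\<in>A. 1 / f i) = 1 / (\<Prod>i\<in>A. f i :: rat)"
  by (induction A rule: infinite_finite_induct) auto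

lemma prod_const_mult: "(\<Prod>i<n. c * f i) = c ^ n * (\<Prod>i<n. f i :: rat)"
  by (induction n) (auto simp: algebra_simps)

lemma prod_add_factor:
  assumes "\<And>i. i < n \<Longrightarrow> (g i :: rat) \<noteq> 0"
  shows "(\<Prod>i<n. g i + c) = (\<Prod>i<n. g i) * (\<Prod>i<n. 1 + c / g i)"
  by (subst prod.distrib[symmetric], rule prod.cong) (use assms in \<open>auto simp: field_simps\<close>)

locale pp1 = pp +
  fixes m :: nat
  assumes pm: "p = 3*m+1"
begin

definition C0 :: rat where "C0 = (\<Prod>j<m. of_nat (3*j+3))"
definition C1 :: rat where "C1 = (\<Prod>j<m. of_nat (3*j+1))"
definition C2 :: rat where "C2 = (\<Prod>j<m. of_nat (3*j+2))"
definition sa :: rat where "sa = (\<Sum>j<m. 1/of_nat (3*j+1))"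
definition sb :: rat where "sb = (\<Sum>j<m. 1/(of_nat (3*j+1))^2)"
definition c0 :: rat where "c0 = (\<Sum>j<m. 1/of_nat (3*j+3))"
definition d0 :: rat where "d0 = (\<Sum>j<m. 1/(of_nat (3*j+3))^2)"
definition s2 :: rat where "s2 = (\<Sum>j<m. 1/of_nat (3*j+2))"
definition t2 :: rat where "t2 = (\<Sum>j<m. 1/(of_nat (3*j+2))^2)"
definition V :: rat where "V = (\<Prod>j<m. 1 + P * (-1/of_nat (3*j+3)))"
definition Q1 :: rat where "Q1 = (\<Prod>j<m. 1 + P * (1/of_nat (3*j+1)))"
definition E1 :: rat where "E1 = (\<Prod>j<m. 1 + P * (2/of_nat (3*j+1)))"
definition E2 :: rat where "E2 = (\<Prod>j<m. 1 + P * (1/of_nat (3*j+2)))"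

lemma small: "j < m \<Longrightarrow> 0 < 3*j+1 \<and> 3*j+1 < p" "j < m \<Longrightarrow> 0 < 3*j+2 \<and> 3*j+2 < p"
  "j < m \<Longrightarrow> 0 < 3*j+3 \<and> 3*j+3 < p"
  using pm by auto

lemma pint_inv_small': "j < m \<Longrightarrow> pint p (1/of_nat (3*j+1))" "j < m \<Longrightarrow> pint p (1/of_nat (3*j+2))"
  "j < m \<Longrightarrow> pint p (1/of_nat (3*j+3))"
  by (rule pint_inv_small; use small in auto)+

lemma pint_inv_small2: "j < m \<Longrightarrow> pint p (1/(of_nat (3*j+1))^2)" "j < m \<Longrightarrow> pint p (1/(of_nat (3*j+2))^2)"
  "j < m \<Longrightarrow> pint p (1/(of_nat (3*j+3))^2)"
  using pint_pow[OF pint_inv_small'(1), of j 2] pint_pow[OF pint_inv_small'(2), of j 2]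
    pint_pow[OF pint_inv_small'(3), of j 2] by (auto simp: power_one_over)

lemma pints: "pint p sa" "pint p sb" "pint p c0" "pint p d0" "pint p s2" "pint p t2"
  unfolding sa_def sb_def c0_def d0_def s2_def t2_def
  by (rule pint_sum, rule pint_inv_small' pint_inv_small2, simp)+

lemma pint_invC: "pint p (1/C0)" "pint p (1/C1)" "pint p (1/C2)"
  unfolding C0_def C1_def C2_def prod_inv_rat[symmetric]
  by (rule pint_prod, rule pint_inv_small', simp)+

lemma pint_C: "pint p C0" "pint p C1" "pint p C2"
  unfolding C0_def C1_def C2_def by (rule pint_prod, rule pint_nat)+

lemma C_nz: "C0 \<noteq> 0" "C1 \<noteq> 0" "C2 \<noteq> 0"
  unfolding C0_def C1_def C2_def by auto

lemma I3: "W = C0 * C1 * C2"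
proof -
  have "W = (\<Prod>k<3*m. of_nat (k+1))" unfolding W_def using pm by simp
  also have "\<dots> = (\<Prod>j<m. of_nat (3*j+1) * of_nat (3*j+2) * of_nat (3*j+3))"
    by (subst prod_split3) (simp add: algebra_simps)
  also have "\<dots> = C0 * C1 * C2" unfolding C0_def C1_def C2_def by (simp only: prod.distrib ac_simps)
  finally show ?thesis .
qed

lemma I5: "(3::rat)^(3*m) = E2 * E1"
proof -
  have pm1: "p - 1 = 3*m" using pm by simp
  have "3^(3*m) * W = (\<Prod>k<3*m. 3 * of_nat (k+1))" unfolding W_def pm1 prod_const_mult ..
  also have "\<dots> = (\<Prod>k<m+m+m. 3 * of_nat (k+1))"
  proof -
    have "3*m = m+m+m" by simp
    then show ?thesis by (simp only:)
  qed
  also have "\<dots> = (\<Prod>k<m. 3 * of_nat (k+1)) * (\<Prod>k<m. 3 * of_nat (m+k+1)) * (\<Prod>k<m. 3 * of_nat (m+m+k+1))"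
    by (simp only: prod_split add.assoc)
  also have "(\<Prod>k<m. 3 * of_nat (k+1)) = C0" unfolding C0_def by (rule prod.cong) auto
  also have "(\<Prod>k<m. 3 * of_nat (m+k+1)) = (\<Prod>k<m. of_nat (3*k+2) + P)"
    by (rule prod.cong) (auto simp: pm)
  also have "\<dots> = C2 * E2" unfolding C2_def E2_def
    by (subst prod_add_factor) auto
  also have "(\<Prod>k<m. 3 * of_nat (m+m+k+1)) = (\<Prod>k<m. of_nat (3*k+1) + 2*P)"
    by (rule prod.cong) (auto simp: pm)
  also have "\<dots> = C1 * E1" unfolding C1_def E1_def
    by (subst prod_add_factor) (auto simp: mult.commute)
  finally have "3^(3*m) * (C0 * C1 * C2) = C0 * (C2 * E2) * (C1 * E1)" unfolding I3 .
  then show ?thesis using C_nz by (simp add: field_simps)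
qed

lemma refl1: "j < m \<Longrightarrow> (of_nat (3*(m - Suc j)+1) :: rat) = P - of_nat (3*j+3)"
  using pm by (simp add: of_nat_diff)
lemma refl2: "j < m \<Longrightarrow> (of_nat (3*(m - Suc j)+2) :: rat) = P - of_nat (3*j+2)"
  using pm by (simp add: of_nat_diff)

lemma I6_t: "j < m \<Longrightarrow> (of_nat (3*(m - Suc j)+1) :: rat) = (-1) * of_nat (3*j+3) * (1 + P * (-1/of_nat (3*j+3)))"
proof -
  assume j: "j < m"
  have "(of_nat (3*j+3) :: rat) * (1 + P * (-1/of_nat (3*j+3))) = of_nat (3*j+3) - P"
    by (simp add: field_simps)
  then show ?thesis unfolding refl1[OF j] by (simp only: mult.assoc) simp
qed

lemma I6: "C1 = (-1)^m * C0 * V"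
proof -
  have "C1 = (\<Prod>j<m. of_nat (3*(m - Suc j)+1))" unfolding C1_def
    by (rule prod.nat_diff_reindex[symmetric])
  also have "\<dots> = (\<Prod>j<m. (-1) * of_nat (3*j+3) * (1 + P * (-1/of_nat (3*j+3))))"
    by (rule prod.cong[OF refl I6_t]) simp
  also have "\<dots> = (-1)^m * C0 * V" unfolding C0_def V_def by (simp only: prod.distrib prod_constant card_lessThan)
  finally show ?thesis .
qed

definition Q' :: rat where "Q' = (\<Prod>i<2*m. of_nat (i+1) - 2*P/3)"

lemma I4_t1: "j < m \<Longrightarrow> (of_nat ((m - Suc j)+1) - 2*P/3 :: rat) = (-1/3) * of_nat (3*j+1) * (1 + P * (1/of_nat (3*j+1)))"
proof -
  assume j: "j < m"
  have e0: "(of_nat ((m - Suc j)+1) :: rat) = of_nat m - of_nat j" using j by (simp add: of_nat_diff)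
  have e1: "(of_nat (3*j+1)::rat) * (1 + P * (1/of_nat (3*j+1))) = of_nat (3*j+1) + P"
    by (simp add: distrib_left)
  have "(-1/3) * of_nat (3*j+1) * (1 + P * (1/of_nat (3*j+1))) = (-1/3) * (of_nat (3*j+1) + P)"
    by (simp only: mult.assoc e1)
  moreover have "P = 3 * of_nat m + 1" using pm by simp
  ultimately show ?thesis unfolding e0 by (simp add: field_simps)
qed

lemma I4_t2: "j < m \<Longrightarrow> (of_nat (m + (m - Suc j)+1) - 2*P/3 :: rat) = (-1/3) * of_nat (3*j+2)"
proof -
  assume j: "j < m"
  have e0: "(of_nat (m + (m - Suc j)+1) :: rat) = 2 * of_nat m - of_nat j" using j by (simp add: of_nat_diff)
  have "P = 3 * of_nat m + 1" using pm by simp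
  then show ?thesis unfolding e0 by (simp add: field_simps)
qed

lemma I4: "Q' = (1/9)^m * C1 * Q1 * C2"
proof -
  have "Q' = (\<Prod>i<m+m. of_nat (i+1) - 2*P/3)" unfolding Q'_def by (simp only: mult_2)
  also have "\<dots> = (\<Prod>i<m. of_nat (i+1) - 2*P/3) * (\<Prod>i<m. of_nat (m+i+1) - 2*P/3)"
    by (simp only: prod_split add.assoc)
  also have "(\<Prod>i<m. of_nat (i+1) - 2*P/3) = (\<Prod>j<m. of_nat ((m - Suc j)+1) - 2*P/3)"
    by (rule prod.nat_diff_reindex[symmetric])
  also have "\<dots> = (\<Prod>j<m. (-1/3) * of_nat (3*j+1) * (1 + P * (1/of_nat (3*j+1))))"
    by (rule prod.cong[OF refl I4_t1]) simp
  also have "(\<Prod>i<m. of_nat (m+i+1) - 2*P/3) = (\<Prod>j<m. of_nat (m+(m - Suc j)+1) - 2*P/3)"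
    by (rule prod.nat_diff_reindex[symmetric])
  also have "\<dots> = (\<Prod>j<m. (-1/3) * of_nat (3*j+2))"
    by (rule prod.cong[OF refl I4_t2]) simp
  also have "(\<Prod>j<m. (-1/3) * of_nat (3*j+1) * (1 + P * (1/of_nat (3*j+1)))) * (\<Prod>j<m. (-1/3) * (of_nat (3*j+2)::rat))
     = ((-1/3)^m * C1 * Q1) * ((-1/3)^m * C2)"
    unfolding C1_def Q1_def C2_def by (simp only: prod.distrib prod_constant card_lessThan)
  also have "\<dots> = ((-1/3)*(-1/3))^m * C1 * Q1 * C2" by (simp only: power_mult_distrib ac_simps)
  finally show ?thesis by simp
qed

lemma expV: "cg p 3 V (NF (-c0) ((c0^2 - d0)/2))"
proof -
  have "cg p 3 V (NF (\<Sum>j<m. -1/of_nat (3*j+3)) (((\<Sum>j<m. -1/of_nat (3*j+3))^2 - (\<Sum>j<m. (-1/of_nat (3*j+3))^2))/2))"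
    unfolding V_def by (rule prod_expand) (use pint_inv_small' in auto)
  moreover have "(\<Sum>j<m. -1/of_nat (3*j+3)) = -c0" unfolding c0_def by (simp add: sum_negf)
  moreover have "(\<Sum>j<m. (-1/of_nat (3*j+3))^2) = d0" unfolding d0_def by (simp add: power_one_over)
  ultimately show ?thesis by simp
qed

lemma expQ1: "cg p 3 Q1 (NF sa ((sa^2 - sb)/2))"
proof -
  have "cg p 3 Q1 (NF (\<Sum>j<m. 1/of_nat (3*j+1)) (((\<Sum>j<m. 1/of_nat (3*j+1))^2 - (\<Sum>j<m. (1/of_nat (3*j+1))^2))/2))"
    unfolding Q1_def by (rule prod_expand) (use pint_inv_small' in auto)
  then show ?thesis unfolding sa_def sb_def by (simp add: power_one_over)
qed

lemma expE2: "cg p 3 E2 (NF s2 ((s2^2 - t2)/2))"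
proof -
  have "cg p 3 E2 (NF (\<Sum>j<m. 1/of_nat (3*j+2)) (((\<Sum>j<m. 1/of_nat (3*j+2))^2 - (\<Sum>j<m. (1/of_nat (3*j+2))^2))/2))"
    unfolding E2_def by (rule prod_expand) (use pint_inv_small' in auto)
  then show ?thesis unfolding s2_def t2_def by (simp add: power_one_over)
qed

lemma expE1: "cg p 3 E1 (NF (2*sa) (2*sa^2 - 2*sb))"
proof -
  have "cg p 3 E1 (NF (\<Sum>j<m. 2/of_nat (3*j+1)) (((\<Sum>j<m. 2/of_nat (3*j+1))^2 - (\<Sum>j<m. (2/of_nat (3*j+1))^2))/2))"
    unfolding E1_def
  proof (rule prod_expand)
    fix j assume "j \<in> {..<m}"
    then have "pint p (2 * (1/of_nat (3*j+1)))" using pint_inv_small'(1)[of j] by (intro pint_mult) auto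
    then show "pint p (2/of_nat (3*j+1))" by simp
  qed simp
  moreover have "(\<Sum>j<m. 2/of_nat (3*j+1)) = 2 * sa" unfolding sa_def by (simp add: sum_distrib_left)
  moreover have "(\<Sum>j<m. (2/of_nat (3*j+1))^2) = 4 * sb" unfolding sb_def
    by (simp add: sum_distrib_left power_divide)
  ultimately have "cg p 3 E1 (NF (2*sa) (((2*sa)^2 - 4*sb)/2))" by (simp only:)
  moreover have "((2*sa)^2 - 4*sb)/2 = 2*sa^2 - 2*sb" by (simp add: power_mult_distrib)
  ultimately show ?thesis by (simp only:)
qed

lemma R1: "cg p 2 sa (-c0 - P*d0)"
proof -
  have "sa = (\<Sum>j<m. 1/of_nat (3*(m - Suc j)+1))" unfolding sa_def
    by (rule sum.nat_diff_reindex[symmetric])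
  also have "\<dots> = (\<Sum>j<m. 1/(P - of_nat (3*j+3)))" by (rule sum.cong) (auto simp: refl1 pm)
  also have "cg p 2 \<dots> (\<Sum>j<m. -1/of_nat (3*j+3) - P/(of_nat (3*j+3))^2)"
    by (rule cg_sum, rule reflect_inv) (use small in auto)
  also have "(\<Sum>j<m. -1/of_nat (3*j+3) - P/(of_nat (3*j+3))^2) = -c0 - P*d0"
    unfolding c0_def d0_def by (simp add: sum_subtractf sum_negf sum_distrib_left)
  finally show ?thesis .
qed

lemma R2: "cg p 2 (2*s2) (-P*t2)"
proof -
  have "s2 = (\<Sum>j<m. 1/of_nat (3*(m - Suc j)+2))" unfolding s2_def
    by (rule sum.nat_diff_reindex[symmetric])
  also have "\<dots> = (\<Sum>j<m. 1/(P - of_nat (3*j+2)))" by (rule sum.cong) (auto simp: refl2 pm)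
  also have "cg p 2 \<dots> (\<Sum>j<m. -1/of_nat (3*j+2) - P/(of_nat (3*j+2))^2)"
    by (rule cg_sum, rule reflect_inv) (use small in auto)
  also have "(\<Sum>j<m. -1/of_nat (3*j+2) - P/(of_nat (3*j+2))^2) = -s2 - P*t2"
    unfolding s2_def t2_def by (simp add: sum_subtractf sum_negf sum_distrib_left)
  finally have "cg p 2 (s2 + s2) (-s2 - P*t2 + s2)" by (rule cg_add) simp
  moreover have "s2 + s2 = 2*s2" "-s2 - P*t2 + s2 = -P*t2" by simp_all
  ultimately show ?thesis by (simp only:)
qed

lemma R3: "cg p 1 sb d0"
proof -
  have "sb = (\<Sum>j<m. 1/(of_nat (3*(m - Suc j)+1))^2)" unfolding sb_def
    by (rule sum.nat_diff_reindex[symmetric])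
  also have "\<dots> = (\<Sum>j<m. 1/(P - of_nat (3*j+3))^2)" by (rule sum.cong) (auto simp: refl1 pm)
  also have "cg p 1 \<dots> d0" unfolding d0_def
    by (rule cg_sum, rule reflect_inv2) (use small in auto)
  finally show ?thesis .
qed

lemma R4: "cg p 1 (sb + d0 + t2) 0"
proof -
  have pm1: "p - 1 = 3*m" using pm by simp
  have "T = (\<Sum>k<3*m. 1/(of_nat (k+1))^2)" unfolding T_def pm1 ..
  also have "\<dots> = sb + t2 + d0" unfolding sb_def d0_def t2_def
    by (subst sum_split3) (simp add: sum.distrib add.commute)
  also have "\<dots> = sb + d0 + t2" by simp
  finally show ?thesis using T0 by simp
qed

end

context pp1
begin

lemma V_nz: "V \<noteq> 0" using I6 C_nz by auto

lemma core_alg: "Q'^6 / W^4 = ((C2/C0)^2 / ((3::rat)^m)^12) * (V^2 * Q1^6)"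
proof -
  define s :: rat where "s = (-1)^m"
  define t :: rat where "t = 3^m"
  have s2: "s^2 = 1" unfolding s_def by (simp add: power_mult[symmetric] mult.commute[of m] power_mult)
  have t0: "t \<noteq> 0" unfolding t_def by simp
  have n9: "(1/9::rat)^m = 1 / t^2" unfolding t_def by (simp add: power_mult[symmetric] mult.commute[of m] power_mult power_divide)
  have "Q'^6 / W^4 = ((1/t^2) * (s * C0 * V) * Q1 * C2)^6 / (C0 * (s * C0 * V) * C2)^4"
    unfolding I4 I3 I6 n9 s_def ..
  also have "\<dots> = ((C2/C0)^2 / t^12) * (V^2 * Q1^6)"
  proof -
    have s0: "s \<noteq> 0" using s2 by auto
    have "s^4 = (s^2)^2" "s^6 = (s^2)^3" by (simp_all only: power_mult[symmetric]) simp_all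
    then have s46: "s^4 = 1" "s^6 = 1" using s2 by simp_all
    have "((1/t^2) * (s * C0 * V) * Q1 * C2)^6 * (t^12 * C0^2) = (C2^2 * (V^2 * Q1^6)) * (C0 * (s * C0 * V) * C2)^4"
      using t0 s2 by (simp add: power_mult_distrib field_simps s46)
    then show ?thesis using C_nz V_nz t0 s0 by (simp add: field_simps)
  qed
  finally show ?thesis unfolding t_def .
qed

lemma core1: "cg p 3 (Q'^6 / W^4) ((C2/C0)^2 * (1 + P^2 * t2))"
proof -
  note pi = pints
  let ?NV = "NF (-c0) ((c0^2 - d0)/2)" and ?NQ = "NF sa ((sa^2 - sb)/2)"
  let ?NE2 = "NF s2 ((s2^2 - t2)/2)" and ?NE1 = "NF (2*sa) (2*sa^2 - 2*sb)"
  have pn: "pint p ?NV" "pint p ?NQ" "pint p ?NE2" "pint p ?NE1" using pi by (auto intro!: pint_NF)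
  have "cg p 3 (V^2 * Q1^6) (?NV^2 * ?NQ^6)"
    by (rule cg_mult'[OF cg_pow[OF expV] cg_pow[OF expQ1]]) (use pn in auto)
  also have "cg p 3 (?NV^2 * ?NQ^6) (NF 0 t2 * (?NE2 * ?NE1)^4)"
    by (rule final_alg[OF pi R1 R2 R3 R4])
  also have "cg p 3 (NF 0 t2 * (?NE2 * ?NE1)^4) (NF 0 t2 * (E2 * E1)^4)"
  proof (rule cg_multl, rule cg_sym, rule cg_pow)
    show "cg p 3 (E2 * E1) (?NE2 * ?NE1)" by (rule cg_mult'[OF expE2 expE1]) (use pn in auto)
  qed (use pn pi in auto)
  finally have fa: "cg p 3 (V^2 * Q1^6) (NF 0 t2 * (E2 * E1)^4)" .
  have pc: "pint p ((C2/C0)^2 / ((3::rat)^m)^12)"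
  proof -
    have "(C2/C0)^2 / ((3::rat)^m)^12 = (C2 * (1/C0))^2 * ((1/3)^m)^12"
      by (simp add: power_divide)
    moreover have "pint p (C2 * (1/C0))" using pint_mult[OF pint_C(3) pint_invC(1)] .
    moreover have "pint p ((1/3::rat)^m)" using pint_third[of 1] by auto
    ultimately show ?thesis by simp
  qed
  have "cg p 3 (((C2/C0)^2 / ((3::rat)^m)^12) * (V^2 * Q1^6)) (((C2/C0)^2 / ((3::rat)^m)^12) * (NF 0 t2 * (E2 * E1)^4))"
    by (rule cg_multl[OF fa pc])
  moreover have "(E2 * E1)^4 = ((3::rat)^m)^12" unfolding I5[symmetric]
    by (simp add: power_mult[symmetric] mult.commute)
  ultimately show ?thesis unfolding core_alg by (simp add: NF_def)
qed

end

context pp1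
begin

lemma digit1:
  assumes "int p ^ 3 dvd (3 * int n - 1)"
  shows "n mod p = 2*m+1 \<and> int p ^ 2 dvd (3 * int (n div p) + 2)"
proof -
  let ?q = "n div p" and ?r = "n mod p"
  have e: "n = p * ?q + ?r" by simp
  have n: "int n = int p * int ?q + int ?r" by (metis e of_nat_add of_nat_mult)
  have rp: "?r < p" using p5 by simp
  have "int p dvd (3 * int n - 1)" using assms by (rule dvd_trans[rotated]) (simp add: power3_eq_cube)
  then have "int p dvd (3 * int ?r - 1 + int p * (3 * int ?q))" unfolding n by (simp add: algebra_simps)
  then have "int p dvd (3 * int ?r - 1)" by (simp add: dvd_add_left_iff)
  then obtain t where t: "3 * int ?r - 1 = int p * t" by (auto elim: dvdE)
  have t0: "t \<ge> 0"
  proof (rule ccontr)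
    assume "\<not> t \<ge> 0"
    then have "int p * t \<le> int p * (-1)" by (intro mult_left_mono) auto
    then show False using t p5 by simp
  qed
  have t2: "t \<le> 2"
  proof (rule ccontr)
    assume "\<not> t \<le> 2"
    then have "int p * t \<ge> int p * 3" by (intro mult_left_mono) auto
    moreover have "int ?r < int p" using rp by simp
    ultimately show False using t by linarith
  qed
  have "t = 0 \<or> t = 1 \<or> t = 2" using t0 t2 by auto
  moreover have "t \<noteq> 0"
  proof
    assume "t = 0"
    with t have "3 * int ?r = 1" by simp
    moreover have "\<forall>x::int. 3 * x \<noteq> 1" by presburger
    ultimately show False by blast
  qed
  moreover have "t \<noteq> 1"
  proof
    assume "t = 1"
    with t pm have "3 * int ?r = 3 * int m + 2" by simp
    moreover have "\<forall>x y::int. 3 * x \<noteq> 3 * y + 2" by presburger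
    ultimately show False by blast
  qed
  ultimately have "t = 2" by blast
  then have r: "?r = 2*m+1" using t pm by simp
  have "3 * int n - 1 = int p * (3 * int ?q + 2)" unfolding n r using pm by (simp add: algebra_simps)
  then have "int p * int p ^ 2 dvd int p * (3 * int ?q + 2)" using assms by (simp add: power3_eq_cube power2_eq_square mult.assoc)
  then have "int p ^ 2 dvd (3 * int ?q + 2)" using p5 by (subst (asm) dvd_times_left_cancel_iff) auto
  with r show ?thesis by simp
qed

lemma W_unit: "pint p (1/W)"
proof -
  have "\<not> p dvd fact (p - 1)" using prime_dvd_fact_iff[OF prime] p5 by simp
  then show ?thesis unfolding W_fact by (rule pint_inv_nat)
qed

lemma W_nz: "W \<noteq> 0" unfolding W_fact by simp

lemma gamma_case1:
  assumes "int p ^ 3 dvd (3 * int n - 1)"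
  shows "cg p 3 ((of_int (padic_gamma_nat p n))^6) (Q'^6 / W^4)"
proof -
  let ?q = "n div p"
  have r: "n mod p = 2*m+1" and d: "int p ^ 2 dvd (3 * int ?q + 2)" using digit1[OF assms] by auto
  obtain k where k: "3 * int ?q + 2 = int p ^ 2 * k" using d by (auto elim: dvdE)
  have k0: "k \<ge> 0"
  proof (rule ccontr)
    assume "\<not> k \<ge> 0"
    then have "int p ^ 2 * k \<le> int p ^ 2 * 0" by (intro mult_left_mono) auto
    then show False using k by simp
  qed
  obtain kn where kn: "k = int kn" using k0 zero_le_imp_eq_int by blast
  have "int (3 * ?q + 2) = int (p^2 * kn)" using k unfolding kn by simp
  then have kq: "3 * ?q + 2 = p^2 * kn" by (simp only: of_nat_eq_iff)
  have nq: "n = ?q * p + (2*m+1)" using r div_mult_mod_eq[of n p] by simp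
  have "(of_int (padic_gamma_nat p n) :: rat)^6 = (\<Prod>k<n. of_nat (hh k))^6" by (rule gamma6)
  also have "(\<Prod>k<n. (of_nat (hh k)::rat)) = (\<Prod>j<?q. \<Prod>i<p-1. of_nat (j*p + (i+1))) * (\<Prod>i<2*m. of_nat (?q*p + (i+1)))"
  proof -
    have gd: "(\<Prod>k<?q*p + (2*m+1). (of_nat (hh k)::rat)) = (\<Prod>j<?q. \<Prod>i<p-1. of_nat (j*p + (i+1))) * (\<Prod>i<(2*m+1)-1. of_nat (?q*p + (i+1)))"
      by (rule gamma_decomp) (use pm in auto)
    have m1: "(2*m+1)-1 = 2*m" by simp
    show ?thesis using gd unfolding m1 nq[symmetric] .
  qed
  also have "cg p 3 (((\<Prod>j<?q. \<Prod>i<p-1. of_nat (j*p + (i+1))) * (\<Prod>i<2*m. of_nat (?q*p + (i+1))))^6) ((W^?q * Q')^6)"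
  proof (rule cg_pow[OF cg_mult'])
    have "cg p 3 (\<Prod>j<?q. \<Prod>i<p-1. of_nat (j*p + (i+1))) (\<Prod>j<?q. W)"
      by (rule cg_prod[OF block_cong pint_W])
    then show "cg p 3 (\<Prod>j<?q. \<Prod>i<p-1. of_nat (j*p + (i+1))) (W^?q)" by simp
    show "cg p 3 (\<Prod>i<2*m. of_nat (?q*p + (i+1))) Q'" unfolding Q'_def
    proof (rule cg_prod)
      fix i
      have "(of_nat (?q*p + (i+1)) :: rat) - (of_nat (i+1) - 2*P/3) = P * (3 * of_nat ?q + 2) / 3"
        by (simp add: field_simps)
      also have "(3 * of_nat ?q + 2 :: rat) = P^2 * of_nat kn"
        using arg_cong[OF kq, of "of_nat :: nat \<Rightarrow> rat"] by simp
      finally have "(of_nat (?q*p + (i+1)) :: rat) - (of_nat (i+1) - 2*P/3) = P^3 * (of_nat kn / 3)"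
        by (simp add: power3_eq_cube power2_eq_square)
      then show "cg p 3 (of_nat (?q*p + (i+1))) (of_nat (i+1) - 2*P/3)" unfolding cg_def
        by (intro exI[of _ "of_nat kn / 3"]) auto
      show "pint p (of_nat (i+1) - 2*P/3)" by simp
    qed
    show "pint p (W^?q * Q')" unfolding Q'_def using pint_W by (auto intro!: pint_prod)
    show "pint p Q'" unfolding Q'_def by (auto intro!: pint_prod)
  qed (use pint_W in auto)
  also have "(W^?q * Q')^6 = W^(6*?q) * Q'^6" by (simp add: power_mult_distrib power_mult mult.commute)
  also have "cg p 3 (W^(6*?q) * Q'^6) ((1/W^4) * Q'^6)"
  proof (rule cg_mult')
    have w2: "cg p 1 ((W^2)^kn) 1"
    proof -
      have "cg p 1 (W^2) ((-1)^2)" by (rule cg_pow[OF wilson]) simp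
      then have "cg p 1 ((W^2)^kn) (1^kn)" by (intro cg_pow) auto
      then show ?thesis by simp
    qed
    have "cg p 3 (((W^2)^kn)^(p^2)) 1" by (rule pow_p2[OF _ w2]) (use pint_W in auto)
    moreover have "((W^2)^kn)^(p^2) = W^(6*?q) * W^4"
    proof -
      have "((W^2)^kn)^(p^2) = W^(2*kn*p^2)" by (simp only: power_mult)
      also have "2*kn*p^2 = 2*(p^2*kn)" by (simp add: ac_simps)
      also have "2*(p^2*kn) = 6*?q + 4" using kq by simp
      finally show ?thesis by (simp add: power_add)
    qed
    ultimately have "cg p 3 (W^(6*?q) * W^4) 1" by simp
    then have "cg p 3 ((W^(6*?q) * W^4) * (1/W^4)) (1 * (1/W^4))"
      by (rule cg_mult') (use W_unit in \<open>auto simp: power_one_over[symmetric]\<close>)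
    then show "cg p 3 (W^(6*?q)) (1/W^4)" using W_nz by simp
    show "pint p (1/W^4)" using pint_pow[OF W_unit, of 4] by (simp add: power_one_over)
    show "pint p (Q'^6)" unfolding Q'_def by (auto intro!: pint_prod)
  qed simp
  finally show ?thesis by simp
qed

end

lemma (in pp) cg_qcong: "cg p k x y \<Longrightarrow> qcong p k x y"
proof -
  assume "cg p k x y"
  then obtain z where z: "pint p z" "x - y = P^k * z" unfolding cg_def by auto
  then obtain a b where ab: "\<not> int p dvd b" "of_int b * z = of_int a" unfolding pint_def by auto
  have "of_int b * (x - y) = of_int (int p ^ k) * of_int a"
    using z(2) ab(2) by (simp add: algebra_simps)
  then show ?thesis unfolding qcong_def using ab(1) by blast
qed

lemma (in pp) qcong_third:
  assumes "qcong p k (of_nat n) (1/3)"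
  shows "int p ^ k dvd (3 * int n - 1)"
proof -
  obtain a b where ab: "\<not> int p dvd b" "of_int b * (of_nat n - 1/3) = of_int (int p ^ k) * (of_int a :: rat)"
    using assms unfolding qcong_def by auto
  have "(of_int (b * (3 * int n - 1)) :: rat) = 3 * (of_int b * (of_nat n - 1/3))"
    by (simp add: algebra_simps)
  also have "\<dots> = of_int (int p ^ k * (3 * a))" using ab(2) by simp
  finally have "b * (3 * int n - 1) = int p ^ k * (3 * a)" by (simp only: of_int_eq_iff)
  then have d: "int p ^ k dvd b * (3 * int n - 1)" by simp
  have "coprime (int p) b" using ab(1) prime by (simp add: prime_imp_coprime prime_nat_int_transfer)
  then have "coprime (int p ^ k) b" by simp
  then show ?thesis using d by (simp add: coprime_dvd_mult_right_iff)
qed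

context pp1
begin

lemma poch_C2: "pochhammer (2/3::rat) m = (1/3)^m * C2"
proof -
  have "pochhammer (2/3::rat) m = (\<Prod>i<m. (1/3) * of_nat (3*i+2))"
    unfolding pochhammer_prod atLeast0LessThan by (rule prod.cong) (auto simp: field_simps)
  then show ?thesis unfolding C2_def by (simp only: prod_const_mult)
qed

lemma poch_C0: "pochhammer (1::rat) m = (1/3)^m * C0"
proof -
  have "pochhammer (1::rat) m = (\<Prod>i<m. (1/3) * of_nat (3*i+3))"
    unfolding pochhammer_prod atLeast0LessThan by (rule prod.cong) (auto simp: field_simps)
  then show ?thesis unfolding C0_def by (simp only: prod_const_mult)
qed

lemma sum_t2: "(\<Sum>i = 1..m. 1 / (3 * of_nat i - 1)^2) = (t2 :: rat)"
proof -
  have "{1..m} = Suc ` {..<m}"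
  proof
    show "{1..m} \<subseteq> Suc ` {..<m}"
    proof
      fix x assume "x \<in> {1..m}"
      then have "x = Suc (x - 1)" "x - 1 \<in> {..<m}" by auto
      then show "x \<in> Suc ` {..<m}" by (metis imageI)
    qed
  qed auto
  then have "(\<Sum>i = 1..m. 1 / (3 * of_nat i - 1)^2) = (\<Sum>j<m. 1 / (3 * of_nat (Suc j) - 1 :: rat)^2)"
    by (simp add: sum.reindex)
  also have "\<dots> = t2" unfolding t2_def by (rule sum.cong) (auto simp: algebra_simps)
  finally show ?thesis .
qed

lemma target1: "(pochhammer (2/3 :: rat) m)\<^sup>2 / (pochhammer (1 :: rat) m)\<^sup>2
              * (1 + (of_nat p)\<^sup>2 * (\<Sum>i = 1..m. 1 / (3 * of_nat i - 1)\<^sup>2)) = (C2/C0)^2 * (1 + P^2 * t2)"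
  unfolding poch_C2 poch_C0 sum_t2 by (simp add: power_mult_distrib power_divide)

lemma case1: "padic_lim_cong p (\<lambda>n. of_int (padic_gamma_nat p n) ^ 6) (1/3) 3
             ((pochhammer (2/3 :: rat) ((p - 1) div 3))\<^sup>2 / (pochhammer (1 :: rat) ((p - 1) div 3))\<^sup>2
              * (1 + (of_nat p)\<^sup>2 * (\<Sum>i = 1..(p - 1) div 3. 1 / (3 * of_nat i - 1)\<^sup>2)))"
proof -
  have md: "(p - 1) div 3 = m" using pm by simp
  show ?thesis unfolding padic_lim_cong_def md target1
  proof (intro exI allI impI)
    fix n assume "qcong p 3 (of_nat n) (1/3)"
    then have d: "int p ^ 3 dvd (3 * int n - 1)" by (rule qcong_third)
    have "cg p 3 ((of_int (padic_gamma_nat p n))^6) ((C2/C0)^2 * (1 + P^2 * t2))"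
      using cg_trans[OF gamma_case1[OF d] core1] .
    then show "qcong p 3 (of_int (padic_gamma_nat p n) ^ 6) ((C2/C0)^2 * (1 + P^2 * t2))"
      by (rule cg_qcong)
  qed
qed

end

lemma (in pp) pint_inv_prod:
  assumes "\<And>i. i < n \<Longrightarrow> \<not> p dvd g i"
  shows "pint p (1 / (\<Prod>i<n. of_nat (g i)))"
  unfolding prod_inv_rat[symmetric] by (rule pint_prod) (use assms in auto)

lemma (in pp) cg_P: "cg p 1 (P * x + y) y" if "pint p x"
  unfolding cg_def using that by (intro exI[of _ x]) auto

locale pp2 = pp +
  fixes m :: nat
  assumes pm: "p = 3*m+2"
begin

definition F :: rat where "F = (\<Prod>i<m. of_nat (i+1))"
definition G :: rat where "G = (\<Prod>i<m. of_nat (m+2+i))"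
definition H2 :: rat where "H2 = (\<Prod>i<m. of_nat (2*m+2+i))"
definition N0 :: rat where "N0 = (\<Prod>j<m. of_nat (3*j+2))"
definition D0 :: rat where "D0 = (\<Prod>j<m. of_nat (3*j+3))"
definition N1 :: rat where "N1 = (\<Prod>i<m. of_nat (3*m+3*i+5))"
definition D1 :: rat where "D1 = (\<Prod>i<m. of_nat (3*m+3*i+6))"

lemma ndv: "0 < x \<Longrightarrow> x < p \<Longrightarrow> \<not> p dvd x" by (auto dest: dvd_imp_le)

lemma pintF: "pint p F" "pint p G" "pint p H2" "pint p N0" "pint p D0" "pint p N1" "pint p D1"
  unfolding F_def G_def H2_def N0_def D0_def N1_def D1_def by (rule pint_prod, rule pint_nat)+

lemma pint_invF: "pint p (1/F)" "pint p (1/G)"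
proof -
  show "pint p (1/F)" unfolding F_def by (rule pint_inv_prod, rule ndv) (use pm in auto)
  show "pint p (1/G)" unfolding G_def by (rule pint_inv_prod, rule ndv) (use pm in auto)
qed

lemma F_nz: "F \<noteq> 0" "G \<noteq> 0" unfolding F_def G_def by auto

lemma Da: "D0 = 3^m * F" "D1 = 3^m * G"
proof -
  have "D0 = (\<Prod>j<m. 3 * of_nat (j+1))" unfolding D0_def by (rule prod.cong) auto
  then show "D0 = 3^m * F" unfolding F_def by (simp only: prod_const_mult)
  have "D1 = (\<Prod>j<m. 3 * of_nat (m+2+j))" unfolding D1_def by (rule prod.cong) auto
  then show "D1 = 3^m * G" unfolding G_def by (simp only: prod_const_mult)
qed

lemma pint_invD: "pint p (1/D0)" "pint p (1/D1)"
proof -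
  have t: "pint p ((1/3::rat)^m)" using pint_third[of 1] by auto
  show "pint p (1/D0)" using pint_mult[OF t pint_invF(1)] unfolding Da by (simp add: power_one_over)
  show "pint p (1/D1)" using pint_mult[OF t pint_invF(2)] unfolding Da by (simp add: power_one_over)
qed

lemma Nb: "cg p 1 N0 ((-1)^m * D0)"
proof -
  have "N0 = (\<Prod>j<m. of_nat (3*(m - Suc j)+2))" unfolding N0_def by (rule prod.nat_diff_reindex[symmetric])
  also have "\<dots> = (\<Prod>j<m. P * 1 + (-1) * of_nat (3*j+3))"
    by (rule prod.cong) (auto simp: pm of_nat_diff)
  also have "cg p 1 \<dots> (\<Prod>j<m. (-1) * of_nat (3*j+3))"
    by (rule cg_prod, rule cg_P) auto
  also have "(\<Prod>j<m. (-1) * (of_nat (3*j+3)::rat)) = (-1)^m * D0" unfolding D0_def by (simp only: prod_const_mult)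
  finally show ?thesis .
qed

lemma Nc: "cg p 1 N1 (3^m * F)"
proof -
  have "N1 = (\<Prod>i<m. P * 1 + 3 * of_nat (i+1))" unfolding N1_def by (rule prod.cong) (auto simp: pm)
  also have "cg p 1 \<dots> (\<Prod>i<m. 3 * of_nat (i+1))" by (rule cg_prod, rule cg_P) auto
  also have "(\<Prod>i<m. 3 * (of_nat (i+1)::rat)) = 3^m * F" unfolding F_def by (simp only: prod_const_mult)
  finally show ?thesis .
qed

lemma Wd: "W = F * of_nat (m+1) * G * H2"
proof -
  have pm1: "p - 1 = m + (1 + (m + m))" using pm by simp
  have "W = (\<Prod>k<m + (1 + (m + m)). of_nat (k+1))" unfolding W_def pm1 ..
  also have "\<dots> = F * (\<Prod>k<1 + (m + m). of_nat (m + k + 1))" unfolding F_def by (simp only: prod_split)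
  also have "(\<Prod>k<1 + (m + m). (of_nat (m + k + 1)::rat)) = of_nat (m+1) * (\<Prod>k<m + m. of_nat (m + (1 + k) + 1))"
    by (simp only: prod_split) simp
  also have "(\<Prod>k<m + m. (of_nat (m + (1 + k) + 1)::rat)) = G * H2"
    unfolding G_def H2_def by (simp only: prod_split) (simp add: algebra_simps)
  finally show ?thesis by (simp add: ac_simps)
qed

lemma He: "cg p 1 H2 ((-1)^m * F)"
proof -
  have "H2 = (\<Prod>j<m. of_nat (2*m+2+(m - Suc j)))" unfolding H2_def by (rule prod.nat_diff_reindex[symmetric])
  also have "\<dots> = (\<Prod>j<m. P * 1 + (-1) * of_nat (j+1))"
    by (rule prod.cong) (auto simp: pm of_nat_diff)
  also have "cg p 1 \<dots> (\<Prod>j<m. (-1) * of_nat (j+1))"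
    by (rule cg_prod, rule cg_P) auto
  also have "(\<Prod>j<m. (-1) * (of_nat (j+1)::rat)) = (-1)^m * F" unfolding F_def by (simp only: prod_const_mult)
  finally show ?thesis .
qed

lemma K9: "cg p 1 ((F^2 * G)^2) 9"
proof -
  let ?s = "(-1::rat)^m"
  have "cg p 1 W (F * of_nat (m+1) * G * (?s * F))" unfolding Wd
    by (rule cg_multl[OF He]) (use pintF in auto)
  then have c1: "cg p 1 (-1) (?s * of_nat (m+1) * (F^2 * G))"
    using cg_trans[OF cg_sym[OF wilson]] by (simp add: ac_simps power2_eq_square)
  have "cg p 1 (3 * (-1)) (3 * (?s * of_nat (m+1) * (F^2 * G)))" by (rule cg_multl[OF c1]) simp
  also have "3 * (?s * of_nat (m+1) * (F^2 * G)) = P * (?s * F^2 * G) + ?s * (F^2 * G)"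
    using pm by (simp add: algebra_simps)
  also have "cg p 1 \<dots> (?s * (F^2 * G))" by (rule cg_P) (use pintF in auto)
  finally have "cg p 1 (-3) (?s * (F^2 * G))" by simp
  then have "cg p 1 ((-3)^2) ((?s * (F^2 * G))^2)" by (rule cg_pow) (use pintF in auto)
  moreover have "?s^2 = 1" by (simp add: power_mult[symmetric] mult.commute[of m] power_mult)
  ultimately have "cg p 1 9 ((F^2 * G)^2)" by (simp add: power_mult_distrib)
  then show ?thesis by (rule cg_sym)
qed

end

context pp2
begin

lemma digit2:
  assumes "int p dvd (3 * int n - 1)"
  shows "n mod p = m+1"
proof -
  let ?q = "n div p" and ?r = "n mod p"
  have e: "n = p * ?q + ?r" by simp
  have n: "int n = int p * int ?q + int ?r" by (metis e of_nat_add of_nat_mult)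
  have rp: "?r < p" using p5 by simp
  have "int p dvd (3 * int ?r - 1 + int p * (3 * int ?q))" using assms unfolding n by (simp add: algebra_simps)
  then have "int p dvd (3 * int ?r - 1)" by (simp add: dvd_add_left_iff)
  then obtain t where t: "3 * int ?r - 1 = int p * t" by (auto elim: dvdE)
  have t0: "t \<ge> 0"
  proof (rule ccontr)
    assume "\<not> t \<ge> 0"
    then have "int p * t \<le> int p * (-1)" by (intro mult_left_mono) auto
    then show False using t p5 by simp
  qed
  have t2: "t \<le> 2"
  proof (rule ccontr)
    assume "\<not> t \<le> 2"
    then have "int p * t \<ge> int p * 3" by (intro mult_left_mono) auto
    moreover have "int ?r < int p" using rp by simp
    ultimately show False using t by linarith
  qed
  have "t = 0 \<or> t = 1 \<or> t = 2" using t0 t2 by auto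
  moreover have "t \<noteq> 0"
  proof
    assume "t = 0"
    with t have "3 * int ?r = 1" by simp
    moreover have "\<forall>x::int. 3 * x \<noteq> 1" by presburger
    ultimately show False by blast
  qed
  moreover have "t \<noteq> 2"
  proof
    assume "t = 2"
    with t pm have "3 * int ?r = 3 * (2 * int m + 1) + 2" by simp
    moreover have "\<forall>x y::int. 3 * x \<noteq> 3 * y + 2" by presburger
    ultimately show False by blast
  qed
  ultimately have "t = 1" by blast
  then show ?thesis using t pm by simp
qed

lemma gamma_case2:
  assumes "int p dvd (3 * int n - 1)"
  shows "cg p 1 ((of_int (padic_gamma_nat p n))^6) (F^6)"
proof -
  let ?q = "n div p"
  have r: "n mod p = m+1" using digit2[OF assms] .
  have nq: "n = ?q * p + (m+1)" using r div_mult_mod_eq[of n p] by simp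
  have "(of_int (padic_gamma_nat p n) :: rat)^6 = (\<Prod>k<n. of_nat (hh k))^6" by (rule gamma6)
  also have "(\<Prod>k<n. (of_nat (hh k)::rat)) = (\<Prod>j<?q. \<Prod>i<p-1. of_nat (j*p + (i+1))) * (\<Prod>i<m. of_nat (?q*p + (i+1)))"
  proof -
    have gd: "(\<Prod>k<?q*p + (m+1). (of_nat (hh k)::rat)) = (\<Prod>j<?q. \<Prod>i<p-1. of_nat (j*p + (i+1))) * (\<Prod>i<(m+1)-1. of_nat (?q*p + (i+1)))"
      by (rule gamma_decomp) (use pm in auto)
    have m1: "(m+1)-1 = m" by simp
    show ?thesis using gd unfolding m1 nq[symmetric] .
  qed
  also have "cg p 1 (((\<Prod>j<?q. \<Prod>i<p-1. of_nat (j*p + (i+1))) * (\<Prod>i<m. of_nat (?q*p + (i+1))))^6) ((W^?q * F)^6)"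
  proof (rule cg_pow[OF cg_mult'])
    have "cg p 1 (\<Prod>j<?q. \<Prod>i<p-1. of_nat (j*p + (i+1))) (\<Prod>j<?q. W)"
      by (rule cg_prod[OF cg_mono[OF block_cong] pint_W]) simp
    then show "cg p 1 (\<Prod>j<?q. \<Prod>i<p-1. of_nat (j*p + (i+1))) (W^?q)" by simp
    have "cg p 1 (\<Prod>i<m. P * of_nat ?q + of_nat (i+1)) F" unfolding F_def
      by (rule cg_prod, rule cg_P) auto
    then show "cg p 1 (\<Prod>i<m. of_nat (?q*p + (i+1))) F" by (simp add: algebra_simps)
    show "pint p (W^?q * F)" using pint_W pintF by auto
    show "pint p F" using pintF by auto
  qed (use pint_W in auto)
  also have "(W^?q * F)^6 = ((W^2)^(3*?q)) * F^6" by (simp add: power_mult_distrib power_mult[symmetric] mult.commute)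
  also have "cg p 1 \<dots> (1 * F^6)"
  proof (rule cg_mult')
    have "cg p 1 (W^2) ((-1)^2)" by (rule cg_pow[OF wilson]) simp
    then have "cg p 1 ((W^2)^(3*?q)) (1^(3*?q))" by (intro cg_pow) auto
    then show "cg p 1 ((W^2)^(3*?q)) 1" by simp
  qed (use pintF in auto)
  finally show ?thesis by simp
qed

definition S0 :: rat where "S0 = (\<Sum>j<m. 1/(of_nat (3*j+2))^2)"
definition S1 :: rat where "S1 = (\<Sum>i<m. 1/(of_nat (3*m+3*i+5))^2)"

lemma pintS: "pint p S0" "pint p S1"
proof -
  show "pint p S0" unfolding S0_def
  proof (rule pint_sum)
    fix j assume "j \<in> {..<m}"
    then have "\<not> p dvd (3*j+2)^2" using prime pm by (auto simp: prime_dvd_power_iff dest: dvd_imp_le)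
    then show "pint p (1/(of_nat (3*j+2))^2)" using pint_inv_nat[of "(3*j+2)^2"] by simp
  qed
  show "pint p S1" unfolding S1_def
  proof (rule pint_sum)
    fix i assume i: "i \<in> {..<m}"
    have "\<not> p dvd (3*m+3*i+5)"
    proof
      assume "p dvd (3*m+3*i+5)"
      then have "p dvd (p + (3*i+3))" using pm by (simp add: algebra_simps)
      then have "p dvd (3*i+3)" by (simp add: dvd_add_right_iff)
      then show False using i pm by (auto dest: dvd_imp_le)
    qed
    then have "\<not> p dvd (3*m+3*i+5)^2" using prime by (simp add: prime_dvd_power_iff)
    then show "pint p (1/(of_nat (3*m+3*i+5))^2)" using pint_inv_nat[of "(3*m+3*i+5)^2"] by simp
  qed
qed

end

context pp2
begin

lemma poch2: "pochhammer (2/3::rat) (2*m+1) = (1/3)^(2*m+1) * (N0 * P * N1)"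
proof -
  have "pochhammer (2/3::rat) (2*m+1) = (\<Prod>i<2*m+1. (1/3) * of_nat (3*i+2))"
    unfolding pochhammer_prod atLeast0LessThan by (rule prod.cong) (auto simp: field_simps)
  also have "\<dots> = (1/3)^(2*m+1) * (\<Prod>i<m + (1 + m). of_nat (3*i+2))"
  proof -
    have "2*m+1 = m+(1+m)" by simp
    then show ?thesis by (simp only: prod_const_mult)
  qed
  also have "(\<Prod>i<m + (1 + m). (of_nat (3*i+2)::rat)) = N0 * (of_nat (3*m+2) * (\<Prod>k<m. of_nat (3*(m+(1+k))+2)))"
    unfolding N0_def by (simp only: prod_split) simp
  also have "(\<Prod>k<m. (of_nat (3*(m+(1+k))+2)::rat)) = N1" unfolding N1_def by (rule prod.cong) auto
  finally show ?thesis using pm by (simp add: ac_simps)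
qed

lemma poch1: "pochhammer (1::rat) (2*m+1) = (1/3)^(2*m+1) * (D0 * (P+1) * D1)"
proof -
  have "pochhammer (1::rat) (2*m+1) = (\<Prod>i<2*m+1. (1/3) * of_nat (3*i+3))"
    unfolding pochhammer_prod atLeast0LessThan by (rule prod.cong) (auto simp: field_simps)
  also have "\<dots> = (1/3)^(2*m+1) * (\<Prod>i<m + (1 + m). of_nat (3*i+3))"
  proof -
    have "2*m+1 = m+(1+m)" by simp
    then show ?thesis by (simp only: prod_const_mult)
  qed
  also have "(\<Prod>i<m + (1 + m). (of_nat (3*i+3)::rat)) = D0 * (of_nat (3*m+3) * (\<Prod>k<m. of_nat (3*(m+(1+k))+3)))"
    unfolding D0_def by (simp only: prod_split) simp
  also have "(\<Prod>k<m. (of_nat (3*(m+(1+k))+3)::rat)) = D1" unfolding D1_def by (rule prod.cong) auto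
  finally show ?thesis using pm by (simp add: ac_simps)
qed

lemma sum2: "(\<Sum>i = 1..2*m+1. 1 / (3 * of_nat i - 1)^2) = S0 + 1/P^2 + (S1 :: rat)"
proof -
  have "{1..2*m+1} = Suc ` {..<2*m+1}"
  proof
    show "{1..2*m+1} \<subseteq> Suc ` {..<2*m+1}"
    proof
      fix x assume "x \<in> {1..2*m+1}"
      then have "x = Suc (x - 1)" "x - 1 \<in> {..<2*m+1}" by auto
      then show "x \<in> Suc ` {..<2*m+1}" by (metis imageI)
    qed
  qed auto
  then have "(\<Sum>i = 1..2*m+1. 1 / (3 * of_nat i - 1)^2) = (\<Sum>j<2*m+1. 1 / (3 * of_nat (Suc j) - 1 :: rat)^2)"
    by (simp add: sum.reindex)
  also have "\<dots> = (\<Sum>j<m + (1 + m). 1 / (of_nat (3*j+2) :: rat)^2)"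
    by (rule sum.cong) (auto simp: algebra_simps)
  also have "\<dots> = S0 + (1/(of_nat (3*m+2))^2 + (\<Sum>k<m. 1 / (of_nat (3*(m+(1+k))+2) :: rat)^2))"
    unfolding S0_def by (simp only: sum_split) simp
  also have "(\<Sum>k<m. 1 / (of_nat (3*(m+(1+k))+2) :: rat)^2) = S1" unfolding S1_def by (rule sum.cong) auto
  finally show ?thesis using pm by (simp add: ac_simps)
qed

lemma D_nz: "D0 \<noteq> 0" "D1 \<noteq> 0" unfolding D0_def D1_def by auto

lemma abs_alg:
  fixes x y u v a P Q s t :: rat
  assumes "a \<noteq> 0" "u \<noteq> 0" "v \<noteq> 0" "P \<noteq> 0" "Q \<noteq> 0"
  shows "(a * (x * P * y))^2 / (a * (u * Q * v))^2 * (1 - 4 * P^2 * (s + 1/P^2 + t))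
     = P^2 * ((x * y * (1/(u * v)))^2 * (1/Q)^2 * (-3 - 4 * P^2 * (s + t)))"
proof -
  have e1: "(a * (x * P * y))^2 / (a * (u * Q * v))^2 = (x * P * y)^2 / (u * Q * v)^2"
    using assms by (simp add: power_mult_distrib)
  have e2: "1 - 4 * P^2 * (s + 1/P^2 + t) = -3 - 4 * P^2 * (s + t)"
  proof -
    have "P^2 * (1/P^2) = 1" using assms by simp
    then show ?thesis by (simp add: algebra_simps)
  qed
  have e3: "(x * P * y)^2 / (u * Q * v)^2 = P^2 * ((x * y * (1/(u * v)))^2 * (1/Q)^2)"
    using assms by (simp add: power_mult_distrib power_divide mult_ac)
  show ?thesis unfolding e1 e2 e3 by (simp only: mult.assoc)
qed

lemma target2: "(pochhammer (2/3 :: rat) (2*m+1))\<^sup>2 / (pochhammer (1 :: rat) (2*m+1))\<^sup>2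
              * (1 - 4 * (of_nat p)\<^sup>2 * (\<Sum>i = 1..2*m+1. 1 / (3 * of_nat i - 1)\<^sup>2))
    = P^2 * ((N0 * N1 * (1/(D0 * D1)))^2 * (1/(P+1))^2 * (-3 - 4 * P^2 * (S0 + S1)))"
proof -
  have P0: "P \<noteq> 0" "P + 1 \<noteq> 0" using p5 by auto
  have t: "((1/3::rat)^(2*m+1)) \<noteq> 0" by simp
  show ?thesis unfolding poch2 poch1 sum2 by (rule abs_alg[OF t D_nz P0])
qed

end

context pp2
begin

lemma Y_cong: "cg p 1 ((N0 * N1 * (1/(D0 * D1)))^2 * (1/(P+1))^2 * (-3 - 4 * P^2 * (S0 + S1))) (-3 * (F * (1/G))^2)"
proof -
  let ?s = "(-1::rat)^m"
  have pD: "pint p (1/(D0 * D1))" using pint_mult[OF pint_invD] by simp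
  have "cg p 1 (N0 * N1) ((?s * D0) * (3^m * F))"
    by (rule cg_mult'[OF Nb Nc]) (use pintF in auto)
  then have "cg p 1 (N0 * N1 * (1/(D0 * D1))) ((?s * D0) * (3^m * F) * (1/(D0 * D1)))"
    by (rule cg_mult'[OF _ cg_refl]) (use pintF pD in auto)
  also have "(?s * D0) * (3^m * F) * (1/(D0 * D1)) = ?s * F * (1/G)"
    unfolding Da(2) using D_nz F_nz by (simp add: field_simps)
  finally have z1: "cg p 1 (N0 * N1 * (1/(D0 * D1))) (?s * F * (1/G))" .
  have pP: "pint p (1/(P+1))"
  proof -
    have "\<not> p dvd (p+1)"
    proof
      assume "p dvd (p+1)"
      then have "p dvd 1" using dvd_add_right_iff[of p p 1] by simp
      then show False using p5 by simp
    qed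
    then show ?thesis using pint_inv_nat[of "p+1"] by (simp add: add.commute)
  qed
  have "1/(P+1) = P * (-1/(P+1)) + 1" using p5 by (simp add: field_simps)
  also have "cg p 1 \<dots> 1" by (rule cg_P) (use pP in auto)
  finally have z2: "cg p 1 (1/(P+1)) 1" .
  have "-3 - 4 * P^2 * (S0 + S1) = P * (-4 * P * (S0 + S1)) + (-3)" by (simp add: algebra_simps power2_eq_square)
  also have "cg p 1 \<dots> (-3)" by (rule cg_P) (use pintS in auto)
  finally have z3: "cg p 1 (-3 - 4 * P^2 * (S0 + S1)) (-3)" .
  have pz: "pint p (?s * F * (1/G))" by (intro pint_mult pintF(1) pint_invF(2) pint_pow pint_uminus pint_1)
  have "cg p 1 ((N0 * N1 * (1/(D0 * D1)))^2 * (1/(P+1))^2 * (-3 - 4 * P^2 * (S0 + S1)))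
      ((?s * F * (1/G))^2 * 1^2 * (-3))"
    by (intro cg_mult' cg_pow z1 z2 z3) (use pz in auto)
  also have "(?s * F * (1/G))^2 * 1^2 * (-3) = -3 * (F * (1/G))^2"
  proof -
    have "?s^2 = 1" by (simp add: power_mult[symmetric] mult.commute[of m] power_mult)
    then show ?thesis by (simp add: power_mult_distrib power_divide)
  qed
  finally show ?thesis .
qed

lemma X_cong: "cg p 1 ((-1/3) * (of_int (padic_gamma_nat p n))^6) (-3 * (F * (1/G))^2)"
  if "int p dvd (3 * int n - 1)"
proof -
  have "cg p 1 ((-1/3) * (of_int (padic_gamma_nat p n))^6) ((-1/3) * F^6)"
    by (rule cg_multl[OF gamma_case2[OF that]]) simp
  also have "(-1/3) * F^6 = ((-1/3) * (F * (1/G))^2) * (F^2 * G)^2" using F_nz by (simp add: field_simps)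
  also have "cg p 1 \<dots> (((-1/3) * (F * (1/G))^2) * 9)"
  proof -
    have "pint p (F * (1/G))" by (rule pint_mult[OF pintF(1) pint_invF(2)])
    then have h1: "pint p ((F * (1/G))^2)" by (rule pint_pow)
    have h2: "pint p (-1/3::rat)" using pint_third[of "-1"] by simp
    have "pint p ((-1/3) * (F * (1/G))^2)" by (rule pint_mult[OF h2 h1])
    from cg_multl[OF K9 this] show ?thesis by (simp only: mult.commute)
  qed
  also have "((-1/3) * (F * (1/G))^2) * 9 = -3 * (F * (1/G))^2" by simp
  finally show ?thesis .
qed

lemma case2: "padic_lim_cong p (\<lambda>n. - ((of_nat p)\<^sup>2 / 3) * of_int (padic_gamma_nat p n) ^ 6) (1/3) 3
             ((pochhammer (2/3 :: rat) ((2 * p - 1) div 3))\<^sup>2 / (pochhammer (1 :: rat) ((2 * p - 1) div 3))\<^sup>2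
              * (1 - 4 * (of_nat p)\<^sup>2 * (\<Sum>i = 1..(2 * p - 1) div 3. 1 / (3 * of_nat i - 1)\<^sup>2)))"
proof -
  have md: "(2 * p - 1) div 3 = 2*m+1" using pm by simp
  show ?thesis unfolding padic_lim_cong_def md target2
  proof (intro exI allI impI)
    fix n assume "qcong p 1 (of_nat n) (1/3)"
    then have d: "int p ^ 1 dvd (3 * int n - 1)" by (rule qcong_third)
    have "cg p 1 ((-1/3) * (of_int (padic_gamma_nat p n))^6)
        ((N0 * N1 * (1/(D0 * D1)))^2 * (1/(P+1))^2 * (-3 - 4 * P^2 * (S0 + S1)))"
      using cg_trans[OF X_cong cg_sym[OF Y_cong]] d by simp
    from cg_pmult[OF this, of 2]
    have "cg p (1+2) (P^2 * ((-1/3) * (of_int (padic_gamma_nat p n))^6))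
        (P^2 * ((N0 * N1 * (1/(D0 * D1)))^2 * (1/(P+1))^2 * (-3 - 4 * P^2 * (S0 + S1))))" .
    then have "cg p 3 (P^2 * ((-1/3) * (of_int (padic_gamma_nat p n))^6))
        (P^2 * ((N0 * N1 * (1/(D0 * D1)))^2 * (1/(P+1))^2 * (-3 - 4 * P^2 * (S0 + S1))))" by (simp only: numeral_3_eq_3 one_add_one Suc_1 numeral_2_eq_2 add_Suc_shift add_0 plus_1_eq_Suc)
    moreover have "P^2 * ((-1/3) * (of_int (padic_gamma_nat p n))^6) = - ((of_nat p)\<^sup>2 / 3) * of_int (padic_gamma_nat p n) ^ 6"
      by simp
    ultimately show "qcong p 3 (- ((of_nat p)\<^sup>2 / 3) * of_int (padic_gamma_nat p n) ^ 6)
        (P^2 * ((N0 * N1 * (1/(D0 * D1)))^2 * (1/(P+1))^2 * (-3 - 4 * P^2 * (S0 + S1))))"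
      using cg_qcong by metis
  qed
qed

end

theorem proposition1p4:
  fixes p :: nat
  assumes "prime p" and "odd p"
  shows "([p = 1] (mod 3) \<longrightarrow>
           padic_lim_cong p (\<lambda>n. of_int (padic_gamma_nat p n) ^ 6) (1/3) 3
             ((pochhammer (2/3 :: rat) ((p - 1) div 3))\<^sup>2 / (pochhammer (1 :: rat) ((p - 1) div 3))\<^sup>2
              * (1 + (of_nat p)\<^sup>2 * (\<Sum>i = 1..(p - 1) div 3. 1 / (3 * of_nat i - 1)\<^sup>2))))
       \<and> ([p = 2] (mod 3) \<longrightarrow>
           padic_lim_cong p (\<lambda>n. - ((of_nat p)\<^sup>2 / 3) * of_int (padic_gamma_nat p n) ^ 6) (1/3) 3
             ((pochhammer (2/3 :: rat) ((2 * p - 1) div 3))\<^sup>2 / (pochhammer (1 :: rat) ((2 * p - 1) div 3))\<^sup>2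
              * (1 - 4 * (of_nat p)\<^sup>2 * (\<Sum>i = 1..(2 * p - 1) div 3. 1 / (3 * of_nat i - 1)\<^sup>2))))"
proof (intro conjI impI)
  have p2: "p \<ge> 2" using assms(1) prime_ge_2_nat by blast
  have p_ne2: "p \<noteq> 2" using assms(2) by auto
  {
    assume c: "[p = 1] (mod 3)"
    then have pm: "p mod 3 = 1" by (simp add: cong_def)
    have "p \<noteq> 3" using pm by auto
    then have p5: "5 \<le> p" using p2 p_ne2 pm assms(2) by presburger
    interpret pp1 p "(p - 1) div 3"
    proof (unfold_locales)
      show "prime p" by (rule assms(1))
      show "5 \<le> p" by (rule p5)
      show "p = 3 * ((p - 1) div 3) + 1" using pm by presburger
    qed
    show "padic_lim_cong p (\<lambda>n. of_int (padic_gamma_nat p n) ^ 6) (1/3) 3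
             ((pochhammer (2/3 :: rat) ((p - 1) div 3))\<^sup>2 / (pochhammer (1 :: rat) ((p - 1) div 3))\<^sup>2
              * (1 + (of_nat p)\<^sup>2 * (\<Sum>i = 1..(p - 1) div 3. 1 / (3 * of_nat i - 1)\<^sup>2)))"
      by (rule case1)
  }
  {
    assume c: "[p = 2] (mod 3)"
    then have pm: "p mod 3 = 2" by (simp add: cong_def)
    then have p5: "5 \<le> p" using p2 p_ne2 pm assms(2) by presburger
    interpret pp2 p "(p - 2) div 3"
    proof (unfold_locales)
      show "prime p" by (rule assms(1))
      show "5 \<le> p" by (rule p5)
      show "p = 3 * ((p - 2) div 3) + 2" using pm by presburger
    qed
    show "padic_lim_cong p (\<lambda>n. - ((of_nat p)\<^sup>2 / 3) * of_int (padic_gamma_nat p n) ^ 6) (1/3) 3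
             ((pochhammer (2/3 :: rat) ((2 * p - 1) div 3))\<^sup>2 / (pochhammer (1 :: rat) ((2 * p - 1) div 3))\<^sup>2
              * (1 - 4 * (of_nat p)\<^sup>2 * (\<Sum>i = 1..(2 * p - 1) div 3. 1 / (3 * of_nat i - 1)\<^sup>2)))"
      by (rule case2)
  }
qed

end
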